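(* Let $\Omega\subset\mathbb{R}^d$ be a bounded Lipschitz domain, let $\mathbf{V}=H^1_0(\Omega)^d$ (complex-valued), let $\rho,\mu,\lambda>0$ and $\omega>0$, and let $$a_1(\mathbf{u},\mathbf{v}) = 2\mu(\varepsilon(\mathbf{u}),\varepsilon(\mathbf{v})) + \lambda(\mathrm{div}\,\mathbf{u},\mathrm{div}\,\mathbf{v}) - \omega^2\rho(\mathbf{u},\mathbf{v}),\qquad \mathbf{u},\mathbf{v}\in\mathbf{V}.$$ Let $\{(\boldsymbol{\psi}_n,\kappa_n)\}_{n\ge0}\subset\mathbf{V}\times\mathbb{R}^+$ be the eigenpairs described in the context, and assume $\omega^2\notin\{\kappa_n : n\ge 0\}$. Set $\overline{m}=\max\{n\in\mathbb{N} : \omega^2>\kappa_n\}$, $\mathbf{V}^-=\mathrm{span}\{\boldsymbol{\psi}_n : 0\le n\le \overline{m}\}$, let $\Pi_{\mathbf{V}^-}$ be the orthogonal projection onto $\mathbf{V}^-$ and $\mathbb{T}=I_{\mathbf{V}}-2\Pi_{\mathbf{V}^-}$. Then $a_1$ is $\mathbb{T}$-coercive. That is, $\mathbb{T}\in\mathcal{L}(\mathbf{V},\mathbf{V})$ is bijective, and there is a constant $\tilde\alpha>0$ such that $|a_1(\mathbf{v},\mathbb{T}\mathbf{v})|\ge\tilde\alpha\|\mathbf{v}\|_{\mathbf{V}}^2$ for all $\mathbf{v}\in\mathbf{V}$.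
   Context: $(\cdot,\cdot)$ denotes the complex $L^2(\Omega)$ inner product, which is linear in the first argument and antilinear in the second. $\varepsilon(\mathbf{u})=\tfrac12(\nabla\mathbf{u}+\nabla\mathbf{u}^T)$. On $\mathbf{V}$ define the inner products - $(\mathbf{u},\mathbf{v})_{0,\rho}=\rho(\mathbf{u},\mathbf{v})$, - $(\mathbf{u},\mathbf{v})_{1,\mu,\lambda}=2\mu(\varepsilon(\mathbf{u}),\varepsilon(\mathbf{v}))+\lambda(\mathrm{div}\,\mathbf{u},\mathrm{div}\,\mathbf{v})$, - $(\mathbf{u},\mathbf{v})_{1,\mu,\lambda,\rho}=(\mathbf{u},\mathbf{v})_{1,\mu,\lambda}+(\mathbf{u},\mathbf{v})_{0,\rho}$. The norm on $\mathbf{V}$ is $\|\cdot\|_{1,\mu,\lambda,\rho}$. Orthogonality in $\mathbf{V}$ (in particular for the projection $\Pi_{\mathbf{V}^-}$) refers to $(\cdot,\cdot)_{1,\mu,\lambda,\rho}$. The family $\{\boldsymbol{\psi}_n\}$ is a Hilbert basis of $\mathbf{V}$ consisting of eigenvectors of the elasticity operator. It satisfies $(\boldsymbol{\psi}_n,\mathbf{v})_{1,\mu,\lambda}=\kappa_n(\boldsymbol{\psi}_n,\mathbf{v})_{0,\rho}$ for all $\mathbf{v}\in\mathbf{V}$, with $\kappa_n\to+\infty$. It is orthogonal in $(\cdot,\cdot)_{1,\mu,\lambda}$ and in $(\cdot,\cdot)_{0,\rho}$, and normalized by $\|\boldsymbol{\psi}_n\|_{1,\mu,\lambda,\rho}=1$.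 *)

theory Defs
  imports "HOL-Analysis.Analysis"
begin

definition lipschitz_boundary :: "(real^'d) set \<Rightarrow> bool" where
  "lipschitz_boundary \<Omega> \<longleftrightarrow>
     (\<forall>x\<in>frontier \<Omega>. \<exists>e r L g. norm e = 1 \<and> r > 0 \<and> L-lipschitz_on UNIV g \<and>
        (\<forall>y. g y = g (y - (y \<bullet> e) *\<^sub>R e)) \<and>
        \<Omega> \<inter> ball x r = {y \<in> ball x r. y \<bullet> e < g y})"

definition bounded_lipschitz_domain :: "(real^'d) set \<Rightarrow> bool" where
  "bounded_lipschitz_domain \<Omega> \<longleftrightarrow>
     open \<Omega> \<and> connected \<Omega> \<and> \<Omega> \<noteq> {} \<and> bounded \<Omega> \<and> lipschitz_boundary \<Omega>"

definition cpartial :: "'d \<Rightarrow> (real^'d \<Rightarrow> real) \<Rightarrow> real^'d \<Rightarrow> real" where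
  "cpartial j f x = deriv (\<lambda>t. f (x + t *\<^sub>R axis j 1)) 0"

fun iter_partial :: "'d list \<Rightarrow> (real^'d \<Rightarrow> real) \<Rightarrow> real^'d \<Rightarrow> real" where
  "iter_partial [] f = f"
| "iter_partial (j # js) f = cpartial j (iter_partial js f)"

definition smooth_fun :: "(real^'d \<Rightarrow> real) \<Rightarrow> bool" where
  "smooth_fun f \<longleftrightarrow>
     (\<forall>js. continuous_on UNIV (iter_partial js f) \<and>
        (\<forall>j x. (\<lambda>t. iter_partial js f (x + t *\<^sub>R axis j 1)) differentiable (at 0)))"

definition tsupport :: "(real^'d \<Rightarrow> real) \<Rightarrow> (real^'d) set" where
  "tsupport f = closure {x. f x \<noteq> 0}"

definition test_fun :: "(real^'d) set \<Rightarrow> (real^'d \<Rightarrow> real) \<Rightarrow> bool" where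
  "test_fun \<Omega> \<phi> \<longleftrightarrow> smooth_fun \<phi> \<and> compact (tsupport \<phi>) \<and> tsupport \<phi> \<subseteq> \<Omega>"

definition test_field :: "(real^'d) set \<Rightarrow> (real^'d \<Rightarrow> complex^'d) \<Rightarrow> bool" where
  "test_field \<Omega> u \<longleftrightarrow>
     (\<forall>i. test_fun \<Omega> (\<lambda>x. Re (u x $ i)) \<and> test_fun \<Omega> (\<lambda>x. Im (u x $ i)))"

definition L2 :: "(real^'d) set \<Rightarrow> (real^'d \<Rightarrow> complex) \<Rightarrow> bool" where
  "L2 \<Omega> f \<longleftrightarrow> f \<in> borel_measurable (lebesgue_on \<Omega>) \<and>
     integrable (lebesgue_on \<Omega>) (\<lambda>x. (cmod (f x))\<^sup>2)"

definition sL2ip :: "(real^'d) set \<Rightarrow> (real^'d \<Rightarrow> complex) \<Rightarrow> (real^'d \<Rightarrow> complex) \<Rightarrow> complex" where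
  "sL2ip \<Omega> f g = (LINT x | lebesgue_on \<Omega>. f x * cnj (g x))"

definition is_weak_partial ::
  "(real^'d) set \<Rightarrow> 'd \<Rightarrow> (real^'d \<Rightarrow> complex) \<Rightarrow> (real^'d \<Rightarrow> complex) \<Rightarrow> bool" where
  "is_weak_partial \<Omega> j f g \<longleftrightarrow>
     (\<forall>\<phi>. test_fun \<Omega> \<phi> \<longrightarrow>
        (LINT x | lebesgue_on \<Omega>. f x * of_real (cpartial j \<phi> x))
          = - (LINT x | lebesgue_on \<Omega>. g x * of_real (\<phi> x)))"

definition H1 :: "(real^'d) set \<Rightarrow> (real^'d \<Rightarrow> complex) \<Rightarrow> bool" where
  "H1 \<Omega> f \<longleftrightarrow> L2 \<Omega> f \<and> (\<forall>j. \<exists>g. L2 \<Omega> g \<and> is_weak_partial \<Omega> j f g)"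

definition wpartial :: "(real^'d) set \<Rightarrow> 'd \<Rightarrow> (real^'d \<Rightarrow> complex) \<Rightarrow> real^'d \<Rightarrow> complex" where
  "wpartial \<Omega> j f = (SOME g. L2 \<Omega> g \<and> is_weak_partial \<Omega> j f g)"

definition H1_normsq :: "(real^'d) set \<Rightarrow> (real^'d \<Rightarrow> complex^'d) \<Rightarrow> real" where
  "H1_normsq \<Omega> u = (\<Sum>i\<in>UNIV. Re (sL2ip \<Omega> (\<lambda>x. u x $ i) (\<lambda>x. u x $ i)) +
      (\<Sum>j\<in>UNIV. Re (sL2ip \<Omega> (wpartial \<Omega> j (\<lambda>x. u x $ i)) (wpartial \<Omega> j (\<lambda>x. u x $ i)))))"

definition H10 :: "(real^'d) set \<Rightarrow> (real^'d \<Rightarrow> complex^'d) set" where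
  "H10 \<Omega> = {u. (\<forall>i. H1 \<Omega> (\<lambda>x. u x $ i)) \<and>
      (\<exists>\<phi>. (\<forall>k. test_field \<Omega> (\<phi> k)) \<and>
           (\<lambda>k. H1_normsq \<Omega> (\<lambda>x. u x - \<phi> k x)) \<longlonglongrightarrow> 0)}"

definition L2ip :: "(real^'d) set \<Rightarrow> (real^'d \<Rightarrow> complex^'d) \<Rightarrow> (real^'d \<Rightarrow> complex^'d) \<Rightarrow> complex" where
  "L2ip \<Omega> u v = (\<Sum>i\<in>UNIV. sL2ip \<Omega> (\<lambda>x. u x $ i) (\<lambda>x. v x $ i))"

definition strain :: "(real^'d) set \<Rightarrow> (real^'d \<Rightarrow> complex^'d) \<Rightarrow> 'd \<Rightarrow> 'd \<Rightarrow> real^'d \<Rightarrow> complex" where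
  "strain \<Omega> u i j x = (wpartial \<Omega> j (\<lambda>y. u y $ i) x + wpartial \<Omega> i (\<lambda>y. u y $ j) x) / 2"

definition wdiv :: "(real^'d) set \<Rightarrow> (real^'d \<Rightarrow> complex^'d) \<Rightarrow> real^'d \<Rightarrow> complex" where
  "wdiv \<Omega> u x = (\<Sum>i\<in>UNIV. wpartial \<Omega> i (\<lambda>y. u y $ i) x)"

definition ip0 :: "real \<Rightarrow> (real^'d) set \<Rightarrow> (real^'d \<Rightarrow> complex^'d) \<Rightarrow> (real^'d \<Rightarrow> complex^'d) \<Rightarrow> complex" where
  "ip0 \<rho> \<Omega> u v = of_real \<rho> * L2ip \<Omega> u v"

definition ip1 :: "real \<Rightarrow> real \<Rightarrow> (real^'d) set \<Rightarrow> (real^'d \<Rightarrow> complex^'d) \<Rightarrow> (real^'d \<Rightarrow> complex^'d) \<Rightarrow> complex" where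
  "ip1 \<mu> lam \<Omega> u v =
     of_real (2 * \<mu>) * (\<Sum>i\<in>UNIV. \<Sum>j\<in>UNIV. sL2ip \<Omega> (strain \<Omega> u i j) (strain \<Omega> v i j))
     + of_real lam * sL2ip \<Omega> (wdiv \<Omega> u) (wdiv \<Omega> v)"

definition ipV :: "real \<Rightarrow> real \<Rightarrow> real \<Rightarrow> (real^'d) set \<Rightarrow> (real^'d \<Rightarrow> complex^'d) \<Rightarrow> (real^'d \<Rightarrow> complex^'d) \<Rightarrow> complex" where
  "ipV \<mu> lam \<rho> \<Omega> u v = ip1 \<mu> lam \<Omega> u v + ip0 \<rho> \<Omega> u v"

definition normV :: "real \<Rightarrow> real \<Rightarrow> real \<Rightarrow> (real^'d) set \<Rightarrow> (real^'d \<Rightarrow> complex^'d) \<Rightarrow> real" where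
  "normV \<mu> lam \<rho> \<Omega> u = sqrt (Re (ipV \<mu> lam \<rho> \<Omega> u u))"

definition a1 :: "real \<Rightarrow> real \<Rightarrow> real \<Rightarrow> real \<Rightarrow> (real^'d) set \<Rightarrow> (real^'d \<Rightarrow> complex^'d) \<Rightarrow> (real^'d \<Rightarrow> complex^'d) \<Rightarrow> complex" where
  "a1 \<mu> lam \<rho> \<omega> \<Omega> u v = ip1 \<mu> lam \<Omega> u v - of_real (\<omega>\<^sup>2) * ip0 \<rho> \<Omega> u v"

definition elastic_eigenbasis ::
  "real \<Rightarrow> real \<Rightarrow> real \<Rightarrow> (real^'d) set \<Rightarrow> (nat \<Rightarrow> real^'d \<Rightarrow> complex^'d) \<Rightarrow> (nat \<Rightarrow> real) \<Rightarrow> bool" where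
  "elastic_eigenbasis \<mu> lam \<rho> \<Omega> \<psi> \<kappa> \<longleftrightarrow>
     (\<forall>n. \<psi> n \<in> H10 \<Omega>) \<and> (\<forall>n. \<kappa> n > 0) \<and> mono \<kappa> \<and> filterlim \<kappa> at_top sequentially \<and>
     (\<forall>n. \<forall>v\<in>H10 \<Omega>. ip1 \<mu> lam \<Omega> (\<psi> n) v = of_real (\<kappa> n) * ip0 \<rho> \<Omega> (\<psi> n) v) \<and>
     (\<forall>n m. n \<noteq> m \<longrightarrow> ip1 \<mu> lam \<Omega> (\<psi> n) (\<psi> m) = 0 \<and> ip0 \<rho> \<Omega> (\<psi> n) (\<psi> m) = 0) \<and>
     (\<forall>n. normV \<mu> lam \<rho> \<Omega> (\<psi> n) = 1) \<and>
     (\<forall>v\<in>H10 \<Omega>. \<forall>e>0. \<exists>N c. normV \<mu> lam \<rho> \<Omega> (\<lambda>x. v x - (\<Sum>n<N. c n *s \<psi> n x)) < e)"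

text \<open>Indices n with omega^2 > kappa_n, i.e. {0..m-bar} (empty if omega^2 < kappa_0).\<close>
definition low_modes :: "real \<Rightarrow> (nat \<Rightarrow> real) \<Rightarrow> nat set" where
  "low_modes \<omega> \<kappa> = {n. \<omega>\<^sup>2 > \<kappa> n}"

definition Vminus :: "real \<Rightarrow> (nat \<Rightarrow> real^'d \<Rightarrow> complex^'d) \<Rightarrow> (nat \<Rightarrow> real) \<Rightarrow> (real^'d \<Rightarrow> complex^'d) set" where
  "Vminus \<omega> \<psi> \<kappa> = {(\<lambda>x. \<Sum>n\<in>low_modes \<omega> \<kappa>. c n *s \<psi> n x) | c. True}"

definition projV :: "real \<Rightarrow> real \<Rightarrow> real \<Rightarrow> (real^'d) set \<Rightarrow> (real^'d \<Rightarrow> complex^'d) set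
    \<Rightarrow> (real^'d \<Rightarrow> complex^'d) \<Rightarrow> real^'d \<Rightarrow> complex^'d" where
  "projV \<mu> lam \<rho> \<Omega> W v = (THE w. w \<in> W \<and> (\<forall>z\<in>W. ipV \<mu> lam \<rho> \<Omega> (\<lambda>x. v x - w x) z = 0))"

definition Top :: "real \<Rightarrow> real \<Rightarrow> real \<Rightarrow> real \<Rightarrow> (real^'d) set \<Rightarrow> (nat \<Rightarrow> real^'d \<Rightarrow> complex^'d)
    \<Rightarrow> (nat \<Rightarrow> real) \<Rightarrow> (real^'d \<Rightarrow> complex^'d) \<Rightarrow> real^'d \<Rightarrow> complex^'d" where
  "Top \<mu> lam \<rho> \<omega> \<Omega> \<psi> \<kappa> v =
     (\<lambda>x. v x - 2 *s projV \<mu> lam \<rho> \<Omega> (Vminus \<omega> \<psi> \<kappa>) v x)"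

end

theory Submission
  imports Defs "HOL-Computational_Algebra.Polynomial" "HOL-Real_Asymp.Real_Asymp"
begin


definition axdiff :: "(real^'d \<Rightarrow> real) \<Rightarrow> bool" where
  "axdiff f \<longleftrightarrow> (\<forall>j x. (\<lambda>t. f (x + t *\<^sub>R axis j 1)) differentiable (at 0))"

lemma cpartial_eqI:
  "((\<lambda>t. f (x + t *\<^sub>R axis j 1)) has_real_derivative D) (at 0) \<Longrightarrow> cpartial j f x = D"
  unfolding cpartial_def by (rule DERIV_imp_deriv)

lemma axdiffD:
  assumes "axdiff f"
  shows "((\<lambda>t. f (x + t *\<^sub>R axis j 1)) has_real_derivative cpartial j f x) (at 0)"
proof -
  from assms obtain D where D: "((\<lambda>t. f (x + t *\<^sub>R axis j 1)) has_real_derivative D) (at 0)"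
    unfolding axdiff_def real_differentiable_def by blast
  with cpartial_eqI[OF D] show ?thesis by simp
qed

lemma axdiff_shift:
  assumes "axdiff f"
  shows "((\<lambda>t. f (x + t *\<^sub>R axis j 1)) has_real_derivative cpartial j f (x + s *\<^sub>R axis j 1)) (at s)"
proof -
  have "((\<lambda>t. f ((x + s *\<^sub>R axis j 1) + t *\<^sub>R axis j 1)) has_real_derivative cpartial j f (x + s *\<^sub>R axis j 1)) (at 0)"
    by (rule axdiffD[OF assms])
  moreover have "(\<lambda>t. f ((x + s *\<^sub>R axis j 1) + t *\<^sub>R axis j 1)) = (\<lambda>t. f (x + (t + s) *\<^sub>R axis j 1))"
    by (auto simp: algebra_simps)
  ultimately have "((\<lambda>t. f (x + (t + s) *\<^sub>R axis j 1)) has_real_derivative cpartial j f (x + s *\<^sub>R axis j 1)) (at 0)"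
    by simp
  then show ?thesis using DERIV_shift[of "\<lambda>t. f (x + t *\<^sub>R axis j 1)" _ 0 s] by simp
qed

lemma axdiffI:
  assumes "\<And>j x. \<exists>D. ((\<lambda>t. f (x + t *\<^sub>R axis j 1)) has_real_derivative D) (at 0)"
  shows "axdiff f"
  using assms unfolding axdiff_def real_differentiable_def by blast

lemma cpartial_add:
  assumes "axdiff f" "axdiff g"
  shows "cpartial j (\<lambda>x. f x + g x) = (\<lambda>x. cpartial j f x + cpartial j g x)"
proof
  fix x show "cpartial j (\<lambda>x. f x + g x) x = cpartial j f x + cpartial j g x"
    by (rule cpartial_eqI, rule DERIV_add[OF axdiffD[OF assms(1)] axdiffD[OF assms(2)]])
qed

lemma axdiff_add: "axdiff f \<Longrightarrow> axdiff g \<Longrightarrow> axdiff (\<lambda>x. f x + g x)"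
  by (rule axdiffI, rule exI, rule DERIV_add[OF axdiffD axdiffD])

lemma cpartial_mult:
  assumes "axdiff f" "axdiff g"
  shows "cpartial j (\<lambda>x. f x * g x) = (\<lambda>x. cpartial j f x * g x + f x * cpartial j g x)"
proof
  fix x show "cpartial j (\<lambda>x. f x * g x) x = cpartial j f x * g x + f x * cpartial j g x"
    by (rule cpartial_eqI) (use DERIV_mult'[OF axdiffD[OF assms(1)] axdiffD[OF assms(2)], of x j x j] in \<open>simp add: algebra_simps\<close>)
qed

lemma axdiff_mult: "axdiff f \<Longrightarrow> axdiff g \<Longrightarrow> axdiff (\<lambda>x. f x * g x)"
  by (rule axdiffI, rule exI, rule DERIV_mult'[OF axdiffD axdiffD])

lemma smooth_fun_alt: "smooth_fun f \<longleftrightarrow> (\<forall>js. continuous_on UNIV (iter_partial js f) \<and> axdiff (iter_partial js f))"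
  unfolding smooth_fun_def axdiff_def by auto

lemma iter_partial_append: "iter_partial (js @ ks) f = iter_partial js (iter_partial ks f)"
  by (induction js) auto

lemma iter_partial_snoc: "iter_partial (js @ [j]) f = iter_partial js (cpartial j f)"
  using iter_partial_append[of js "[j]"] by simp

lemma smooth_cpartial: "smooth_fun f \<Longrightarrow> smooth_fun (cpartial j f)"
  unfolding smooth_fun_alt by (metis iter_partial_snoc)

lemma iter_partial_add:
  assumes "\<And>ms. length ms < length ks \<Longrightarrow> axdiff (iter_partial ms f) \<and> axdiff (iter_partial ms g)"
  shows "iter_partial ks (\<lambda>x. f x + g x) = (\<lambda>x. iter_partial ks f x + iter_partial ks g x)"
  using assms
proof (induction ks)
  case Nil then show ?case by simp
next
  case (Cons k ks)
  have IH: "iter_partial ks (\<lambda>x. f x + g x) = (\<lambda>x. iter_partial ks f x + iter_partial ks g x)"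
    using Cons by auto
  have "axdiff (iter_partial ks f)" "axdiff (iter_partial ks g)" using Cons.prems[of ks] by auto
  then show ?case by (simp add: IH cpartial_add)
qed

lemma smooth_add:
  assumes "smooth_fun f" "smooth_fun g" shows "smooth_fun (\<lambda>x. f x + g x)"
proof -
  have "iter_partial ks (\<lambda>x. f x + g x) = (\<lambda>x. iter_partial ks f x + iter_partial ks g x)" for ks
    by (rule iter_partial_add) (use assms in \<open>auto simp: smooth_fun_alt\<close>)
  then show ?thesis using assms unfolding smooth_fun_alt
    by (auto intro!: continuous_on_add axdiff_add)
qed

lemma cpartial_const: "cpartial j (\<lambda>x. c) = (\<lambda>x. 0)"
  by (rule ext, rule cpartial_eqI) simp

lemma iter_partial_const: "iter_partial js (\<lambda>x. c) = (if js = [] then (\<lambda>x. c) else (\<lambda>x. 0))"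
proof (induction js)
  case (Cons k ks) then show ?case
    by (cases ks) (auto simp: cpartial_const)
qed simp

lemma smooth_const: "smooth_fun (\<lambda>x. c)"
  unfolding smooth_fun_alt
  by (auto simp: iter_partial_const intro!: axdiffI exI[of _ 0])

lemma smooth_mult_aux:
  "\<forall>f g. smooth_fun f \<longrightarrow> smooth_fun g \<longrightarrow> (\<forall>js. length js \<le> n \<longrightarrow>
     continuous_on UNIV (iter_partial js (\<lambda>x. f x * g x)) \<and> axdiff (iter_partial js (\<lambda>x. f x * g x)))"
proof (induction n)
  case 0
  show ?case
  proof (intro allI impI)
    fix f g :: "real^'a \<Rightarrow> real" and js :: "'a list"
    assume f: "smooth_fun f" and g: "smooth_fun g" and "length js \<le> 0"
    then have "js = []" by simp
    moreover have "continuous_on UNIV f" "continuous_on UNIV g" "axdiff f" "axdiff g"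
      using f g unfolding smooth_fun_alt by (metis iter_partial.simps(1))+
    ultimately show "continuous_on UNIV (iter_partial js (\<lambda>x. f x * g x)) \<and> axdiff (iter_partial js (\<lambda>x. f x * g x))"
      by (auto intro!: continuous_on_mult axdiff_mult)
  qed
next
  case (Suc n)
  show ?case
  proof (intro allI impI)
    fix f g :: "real^'a \<Rightarrow> real" and js :: "'a list"
    assume f: "smooth_fun f" and g: "smooth_fun g" and len: "length js \<le> Suc n"
    show "continuous_on UNIV (iter_partial js (\<lambda>x. f x * g x)) \<and> axdiff (iter_partial js (\<lambda>x. f x * g x))"
    proof (cases "length js \<le> n")
      case True then show ?thesis using Suc.IH f g by blast
    next
      case False
      then obtain ks j where js: "js = ks @ [j]" and lks: "length ks = n"
        using len by (metis append_butlast_last_id le_Suc_eq length_butlast diff_Suc_1 list.size(3) not_less_eq_eq zero_le)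
      have af: "axdiff f" "axdiff g" using f g unfolding smooth_fun_alt by (metis iter_partial.simps(1))+
      have sf': "smooth_fun (cpartial j f)" "smooth_fun (cpartial j g)" using f g by (auto intro: smooth_cpartial)
      have A: "\<And>ms. length ms \<le> n \<Longrightarrow> continuous_on UNIV (iter_partial ms (\<lambda>x. cpartial j f x * g x)) \<and> axdiff (iter_partial ms (\<lambda>x. cpartial j f x * g x))"
        using Suc.IH sf' g by blast
      have B: "\<And>ms. length ms \<le> n \<Longrightarrow> continuous_on UNIV (iter_partial ms (\<lambda>x. f x * cpartial j g x)) \<and> axdiff (iter_partial ms (\<lambda>x. f x * cpartial j g x))"
        using Suc.IH sf' f by blast
      have eq: "iter_partial js (\<lambda>x. f x * g x) = (\<lambda>x. iter_partial ks (\<lambda>x. cpartial j f x * g x) x + iter_partial ks (\<lambda>x. f x * cpartial j g x) x)"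
        unfolding js iter_partial_snoc cpartial_mult[OF af]
        by (rule iter_partial_add) (use A B lks in auto)
      show ?thesis unfolding eq using A[of ks] B[of ks] lks
        by (auto intro!: continuous_on_add axdiff_add)
    qed
  qed
qed

lemma smooth_mult: "smooth_fun f \<Longrightarrow> smooth_fun g \<Longrightarrow> smooth_fun (\<lambda>x. f x * g x)"
  unfolding smooth_fun_alt[of "\<lambda>x. f x * g x"] using smooth_mult_aux by blast

lemma smooth_scale: "smooth_fun f \<Longrightarrow> smooth_fun (\<lambda>x. c * f x)"
  using smooth_mult[OF smooth_const] by blast

lemma smooth_minus: "smooth_fun f \<Longrightarrow> smooth_fun g \<Longrightarrow> smooth_fun (\<lambda>x. f x - g x)"
  using smooth_add[of f "\<lambda>x. -1 * g x"] smooth_scale[of g "-1"] by simp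

lemma smooth_prod: "finite S \<Longrightarrow> (\<And>i. i \<in> S \<Longrightarrow> smooth_fun (g i)) \<Longrightarrow> smooth_fun (\<lambda>x. \<Prod>i\<in>S. g i x)"
proof (induction S rule: finite_induct)
  case empty then show ?case by (simp add: smooth_const)
next
  case (insert a S) then show ?case by (simp add: smooth_mult)
qed


definition dfam :: "(nat \<Rightarrow> real \<Rightarrow> real) \<Rightarrow> bool" where
  "dfam D \<longleftrightarrow> (\<forall>n t. (D n has_real_derivative D (Suc n) t) (at t))"

lemma axis_nth_if: "axis k (1::real) $ i = (if i = k then 1 else 0)"
  unfolding axis_def by simp

lemma coord_deriv:
  assumes "dfam D"
  shows "((\<lambda>t. D m ((x + t *\<^sub>R axis k 1) $ i)) has_real_derivative (if i = k then D (Suc m) (x $ i) else 0)) (at 0)"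
proof (cases "i = k")
  case True
  have "((\<lambda>t. D m (x $ i + t)) has_real_derivative D (Suc m) (x $ i) * 1) (at 0)"
    by (rule DERIV_chain2[where g="\<lambda>t. x $ i + t"]) (use assms in \<open>auto simp: dfam_def intro!: derivative_eq_intros\<close>)
  then show ?thesis using True by (simp add: axis_nth_if)
next
  case False
  then show ?thesis by (simp add: axis_nth_if)
qed

lemma iter_partial_coord:
  assumes "dfam D"
  shows "iter_partial js (\<lambda>x. D 0 (x $ i)) = (\<lambda>x. if set js \<subseteq> {i} then D (length js) (x $ i) else 0)"
proof (induction js)
  case Nil then show ?case by simp
next
  case (Cons k ks)
  show ?case
  proof (cases "set ks \<subseteq> {i}")
    case False
    then show ?thesis using Cons by (simp add: cpartial_const)
  next
    case True
    have "cpartial k (\<lambda>x. D (length ks) (x $ i)) x = (if i = k then D (Suc (length ks)) (x $ i) else 0)" for x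
      by (rule cpartial_eqI, rule coord_deriv[OF assms])
    then show ?thesis using Cons True by (auto intro!: ext)
  qed
qed

lemma dfam_cont: "dfam D \<Longrightarrow> continuous_on UNIV (\<lambda>x. D n (x $ i))"
  unfolding dfam_def
  by (intro continuous_at_imp_continuous_on ballI isCont_o2[where f="\<lambda>x. x $ i" and g="D n"])
     (auto intro: DERIV_isCont)

lemma smooth_coord:
  assumes "dfam D" shows "smooth_fun (\<lambda>x. D 0 (x $ i))"
  unfolding smooth_fun_alt iter_partial_coord[OF assms]
proof (intro allI conjI)
  fix js :: "'a list"
  show "continuous_on UNIV (\<lambda>x. if set js \<subseteq> {i} then D (length js) (x $ i) else 0)"
    using dfam_cont[OF assms] by (cases "set js \<subseteq> {i}") auto
  show "axdiff (\<lambda>x. if set js \<subseteq> {i} then D (length js) (x $ i) else 0)"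
  proof (rule axdiffI)
    fix j x
    show "\<exists>Da. ((\<lambda>t. if set js \<subseteq> {i} then D (length js) ((x + t *\<^sub>R axis j 1) $ i) else 0) has_real_derivative Da) (at 0)"
    proof (cases "set js \<subseteq> {i}")
      case True
      then show ?thesis using coord_deriv[OF assms, of "length js" x j i] by (simp only: if_True) blast
    next
      case False
      then show ?thesis by (intro exI[of _ 0]) simp
    qed
  qed
qed

lemma dfam_scale:
  assumes "dfam D" shows "dfam (\<lambda>n t. c ^ n * D n (c * t + e))"
  unfolding dfam_def
proof (intro allI)
  fix n t
  have "((\<lambda>t. D n (c * t + e)) has_real_derivative D (Suc n) (c * t + e) * c) (at t)"
    by (rule DERIV_chain2[where g="\<lambda>t. c * t + e"]) (use assms in \<open>auto simp: dfam_def intro!: derivative_eq_intros\<close>)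
  then show "((\<lambda>t. c ^ n * D n (c * t + e)) has_real_derivative c ^ Suc n * D (Suc n) (c * t + e)) (at t)"
    using DERIV_cmult[where c="c ^ n"] by (fastforce simp: algebra_simps)
qed

fun EP :: "nat \<Rightarrow> real poly" where
  "EP 0 = [:1:]"
| "EP (Suc n) = [:0, 0, 1:] * (EP n - pderiv (EP n))"

definition EE :: "nat \<Rightarrow> real \<Rightarrow> real" where
  "EE n t = (if 0 < t then poly (EP n) (1 / t) * exp (- (1 / t)) else 0)"

lemma poly_exp_lim: fixes q :: "real poly" shows "((\<lambda>y. poly q y * exp (- y)) \<longlongrightarrow> 0) at_top"
proof -
  have "((\<lambda>y. \<Sum>k\<le>degree q. coeff q k * (y ^ k / exp y)) \<longlongrightarrow> (\<Sum>k\<le>degree q. coeff q k * 0)) at_top"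
    by (intro tendsto_intros tendsto_power_div_exp_0)
  moreover have "poly q y * exp (- y) = (\<Sum>k\<le>degree q. coeff q k * (y ^ k / exp y))" for y
    by (simp add: poly_altdef sum_distrib_right sum_divide_distrib exp_minus divide_inverse mult.assoc)
  ultimately show ?thesis by simp
qed

lemma poly_exp_lim0: fixes q :: "real poly" shows "((\<lambda>t. poly q (1 / t) * exp (- (1 / t))) \<longlongrightarrow> 0) (at_right 0)"
proof -
  have "((\<lambda>t. poly q (inverse t) * exp (- inverse t)) \<longlongrightarrow> 0) (at_right 0)"
    by (rule filterlim_compose[OF poly_exp_lim filterlim_inverse_at_top_right])
  then show ?thesis by (simp add: inverse_eq_divide)
qed

lemma EE_deriv_pos:
  assumes "0 < t"
  shows "(EE n has_real_derivative EE (Suc n) t) (at t)"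
proof -
  have "((\<lambda>t. poly (EP n) (1 / t) * exp (- (1 / t))) has_real_derivative
      poly (pderiv (EP n)) (1 / t) * (- 1 / t^2) * exp (- (1 / t)) + poly (EP n) (1 / t) * (exp (- (1 / t)) * (1 / t^2))) (at t)"
    using assms
    by (auto intro!: derivative_eq_intros DERIV_chain2[OF poly_DERIV] simp: power2_eq_square)
  moreover have "poly (pderiv (EP n)) (1 / t) * (- 1 / t^2) * exp (- (1 / t)) + poly (EP n) (1 / t) * (exp (- (1 / t)) * (1 / t^2))
      = EE (Suc n) t"
    using assms by (simp add: EE_def algebra_simps power2_eq_square divide_simps)
  ultimately have "((\<lambda>t. poly (EP n) (1 / t) * exp (- (1 / t))) has_real_derivative EE (Suc n) t) (at t)"
    by simp
  then show ?thesis
    by (rule has_field_derivative_transform_within_open[where S="{0<..}"]) (use assms in \<open>auto simp: EE_def\<close>)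
qed

lemma EE_deriv_neg:
  assumes "t < 0"
  shows "(EE n has_real_derivative EE (Suc n) t) (at t)"
proof -
  have "((\<lambda>t. 0) has_real_derivative 0) (at t)" by simp
  then have "(EE n has_real_derivative 0) (at t)"
    by (rule has_field_derivative_transform_within_open[where S="{..<0}"]) (use assms in \<open>auto simp: EE_def\<close>)
  then show ?thesis using assms by (simp add: EE_def)
qed

lemma EE_deriv_0: "(EE n has_real_derivative EE (Suc n) 0) (at 0)"
proof -
  have "((\<lambda>y. (EE n y - EE n 0) / (y - 0)) \<longlongrightarrow> 0) (at 0)"
    unfolding filterlim_at_split
  proof
    have "eventually (\<lambda>y. 0 = (EE n y - EE n 0) / (y - 0)) (at_left 0)"
      by (auto simp: EE_def eventually_at_left_field intro: exI[of _ "-1"])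
    then show "((\<lambda>y. (EE n y - EE n 0) / (y - 0)) \<longlongrightarrow> 0) (at_left 0)"
      by (rule Lim_transform_eventually[rotated]) simp
    have "eventually (\<lambda>y. poly ([:0,1:] * EP n) (1 / y) * exp (- (1 / y)) = (EE n y - EE n 0) / (y - 0)) (at_right 0)"
      by (auto simp: EE_def eventually_at_right_field intro: exI[of _ "1"])
    then show "((\<lambda>y. (EE n y - EE n 0) / (y - 0)) \<longlongrightarrow> 0) (at_right 0)"
      by (rule Lim_transform_eventually[OF poly_exp_lim0])
  qed
  then show ?thesis by (simp add: has_field_derivative_iff EE_def)
qed

lemma dfam_EE: "dfam EE"
  unfolding dfam_def
proof (intro allI)
  fix n t
  show "(EE n has_real_derivative EE (Suc n) t) (at t)"
    using EE_deriv_pos EE_deriv_neg EE_deriv_0 by (cases t "0::real" rule: linorder_cases) auto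
qed

lemma EE0: "EE 0 t = (if 0 < t then exp (- (1 / t)) else 0)"
  by (simp add: EE_def)

lemma EE0_bounds: "0 \<le> EE 0 t" "EE 0 t \<le> 1"
  by (auto simp: EE0)

lemma EE0_pos_iff: "EE 0 t \<noteq> 0 \<longleftrightarrow> 0 < t"
  by (auto simp: EE0)

lemma EE0_lim: "(EE 0 \<longlongrightarrow> 1) at_top"
proof -
  have "((\<lambda>t::real. exp (- inverse t)) \<longlongrightarrow> exp (- 0)) at_top"
    by real_asymp
  moreover have "eventually (\<lambda>t. exp (- inverse t) = EE 0 t) at_top"
    using eventually_gt_at_top[of 0] by eventually_elim (simp add: EE0 inverse_eq_divide)
  ultimately show ?thesis by (simp add: tendsto_cong)
qed

lemma smooth_EE_affine: "smooth_fun (\<lambda>x. EE 0 (c * x $ i + e))"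
  using smooth_coord[OF dfam_scale[OF dfam_EE, of c e], of i] by simp

definition bumpf :: "real^'d \<Rightarrow> real^'d \<Rightarrow> real \<Rightarrow> real^'d \<Rightarrow> real" where
  "bumpf a b k x = (\<Prod>i\<in>UNIV. EE 0 (k * x $ i + (- k * a $ i - 1)) * EE 0 ((- k) * x $ i + (k * b $ i - 1)))"

lemma smooth_bumpf: "smooth_fun (bumpf a b k)"
  unfolding bumpf_def[abs_def]
  by (intro smooth_prod smooth_mult smooth_EE_affine) auto

lemma bumpf_bounds: "0 \<le> bumpf a b k x" "bumpf a b k x \<le> 1"
  unfolding bumpf_def
  by (auto intro!: prod_nonneg prod_le_1 mult_nonneg_nonneg mult_le_one EE0_bounds)

lemma bumpf_nz:
  assumes "0 < k" "bumpf a b k x \<noteq> 0"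
  shows "x \<in> cbox (\<chi> i. a $ i + 1 / k) (\<chi> i. b $ i - 1 / k)"
proof -
  have "\<forall>i. EE 0 (k * x $ i + (- k * a $ i - 1)) \<noteq> 0 \<and> EE 0 ((- k) * x $ i + (k * b $ i - 1)) \<noteq> 0"
    using assms(2) unfolding bumpf_def by auto
  then have "\<forall>i. 0 < k * x $ i + (- k * a $ i - 1) \<and> 0 < (- k) * x $ i + (k * b $ i - 1)"
    by (simp add: EE0_pos_iff)
  then have "\<forall>i. a $ i + 1 / k \<le> x $ i \<and> x $ i \<le> b $ i - 1 / k"
    using assms(1) by (auto simp: field_simps less_imp_le)
  then show ?thesis by (simp add: mem_box_cart)
qed

lemma cbox_shrink_sub:
  assumes "0 < k"
  shows "cbox (\<chi> i. a $ i + 1 / k) (\<chi> i. b $ i - 1 / k) \<subseteq> box a (b::real^'d)"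
  using assms by (auto simp: mem_box_cart) (smt (verit) divide_pos_pos)+

lemma tsupport_bumpf:
  assumes "0 < k"
  shows "tsupport (bumpf a b k) \<subseteq> cbox (\<chi> i. a $ i + 1 / k) (\<chi> i. b $ i - 1 / k)"
  unfolding tsupport_def
  by (rule closure_minimal) (use bumpf_nz[OF assms] in auto)

lemma test_fun_bumpf:
  assumes "0 < k" "box a b \<subseteq> \<Omega>"
  shows "test_fun \<Omega> (bumpf a b k)"
  unfolding test_fun_def
proof (intro conjI smooth_bumpf)
  show "compact (tsupport (bumpf a b k))"
    by (rule compact_Int_closed[of "cbox (\<chi> i. a $ i + 1 / k) (\<chi> i. b $ i - 1 / k)" "tsupport (bumpf a b k)", simplified Int_absorb1[OF tsupport_bumpf[OF assms(1)]]])
       (auto simp: tsupport_def)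
  show "tsupport (bumpf a b k) \<subseteq> \<Omega>"
    using tsupport_bumpf[OF assms(1)] cbox_shrink_sub[OF assms(1)] assms(2) by blast
qed

lemma bumpf_lim:
  "(\<lambda>n. bumpf a b (real (Suc n)) x) \<longlonglongrightarrow> indicator (box a b) x"
proof (cases "x \<in> box a b")
  case True
  then have ab: "\<forall>i. a $ i < x $ i \<and> x $ i < b $ i" by (simp add: mem_box_cart)
  have lim: "(\<lambda>n. EE 0 (real (Suc n) * c - 1)) \<longlonglongrightarrow> 1" if "0 < c" for c :: real
  proof -
    have "filterlim (\<lambda>n. real (Suc n) * c - 1) at_top sequentially"
      using that by real_asymp
    then show ?thesis by (rule filterlim_compose[OF EE0_lim])
  qed
  have "(\<lambda>n. \<Prod>i\<in>UNIV. EE 0 (real (Suc n) * (x $ i - a $ i) - 1) * EE 0 (real (Suc n) * (b $ i - x $ i) - 1))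
      \<longlonglongrightarrow> (\<Prod>i\<in>(UNIV::'a set). 1 * 1)"
    by (intro tendsto_prod tendsto_mult lim) (use ab in auto)
  moreover have "bumpf a b (real (Suc n)) x = (\<Prod>i\<in>UNIV. EE 0 (real (Suc n) * (x $ i - a $ i) - 1) * EE 0 (real (Suc n) * (b $ i - x $ i) - 1))" for n
    unfolding bumpf_def by (intro prod.cong refl arg_cong2[where f="(*)"] arg_cong[where f="EE 0"]) (auto simp: algebra_simps)
  ultimately show ?thesis using True by simp
next
  case False
  have "bumpf a b (real (Suc n)) x = 0" for n
    using bumpf_nz[of "real (Suc n)" a b x] cbox_shrink_sub[of "real (Suc n)" a b] False by auto
  then show ?thesis using False by simp
qed


lemma test_fun_cont: "test_fun \<Omega> \<phi> \<Longrightarrow> continuous_on UNIV \<phi>"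
proof -
  assume "test_fun \<Omega> \<phi>"
  then have "continuous_on UNIV (iter_partial [] \<phi>)" unfolding test_fun_def smooth_fun_def by blast
  then show ?thesis by simp
qed

lemma tsupport_nz: "\<phi> x \<noteq> 0 \<Longrightarrow> x \<in> tsupport \<phi>"
  unfolding tsupport_def using closure_subset[of "{x. \<phi> x \<noteq> 0}"] by auto

lemma cont_compact_support_bounded:
  assumes "continuous_on UNIV \<phi>" "compact (tsupport \<phi>)"
  shows "\<exists>B. \<forall>x. \<bar>\<phi> x\<bar> \<le> B"
proof -
  have "compact (\<phi> ` tsupport \<phi>)"
    by (rule compact_continuous_image) (use assms continuous_on_subset in blast)+
  then obtain B where B: "\<forall>y\<in>\<phi> ` tsupport \<phi>. norm y \<le> B"
    using compact_imp_bounded bounded_iff by metis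
  show ?thesis
  proof (intro exI allI)
    fix x show "\<bar>\<phi> x\<bar> \<le> max B 0"
      using B tsupport_nz[of \<phi> x] by (cases "\<phi> x = 0") auto
  qed
qed

lemma test_fun_bounded: "test_fun \<Omega> \<phi> \<Longrightarrow> \<exists>B. \<forall>x. \<bar>\<phi> x\<bar> \<le> B"
  using cont_compact_support_bounded test_fun_cont unfolding test_fun_def by blast

lemma open_sets_lebesgue: "open (\<Omega>::(real^'d) set) \<Longrightarrow> \<Omega> \<in> sets lebesgue"
  by (rule sets_completionI_sets) (simp add: borel_open)

lemma borel_lebesgue_on: "g \<in> borel_measurable borel \<Longrightarrow> g \<in> borel_measurable (lebesgue_on S)"
  by (rule measurable_restrict_space1, rule measurable_completion) simp

lemma test_fun_meas: "test_fun \<Omega> \<phi> \<Longrightarrow> \<phi> \<in> borel_measurable (lebesgue_on S)"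
  by (intro borel_lebesgue_on borel_measurable_continuous_onI test_fun_cont)

lemma indicator_box_meas: "indicator (box a (b::real^'d)) \<in> borel_measurable (lebesgue_on S)"
  by (intro borel_lebesgue_on borel_measurable_indicator) (simp add: borel_open)

lemma fund_box:
  fixes f :: "real^'d \<Rightarrow> real"
  assumes \<Omega>: "open \<Omega>" and f: "integrable (lebesgue_on \<Omega>) f"
    and orth: "\<And>\<phi>. test_fun \<Omega> \<phi> \<Longrightarrow> integral\<^sup>L (lebesgue_on \<Omega>) (\<lambda>x. f x * \<phi> x) = 0"
    and sub: "box a b \<subseteq> \<Omega>"
  shows "integral\<^sup>L (lebesgue_on \<Omega>) (\<lambda>x. f x * indicator (box a b) x) = 0"
proof -
  have fm: "f \<in> borel_measurable (lebesgue_on \<Omega>)" using f by auto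
  have "(\<lambda>n. integral\<^sup>L (lebesgue_on \<Omega>) (\<lambda>x. f x * bumpf a b (real (Suc n)) x))
      \<longlonglongrightarrow> integral\<^sup>L (lebesgue_on \<Omega>) (\<lambda>x. f x * indicator (box a b) x)"
  proof (rule integral_dominated_convergence[where w="\<lambda>x. norm (f x)"])
    show "(\<lambda>x. f x * indicator (box a b) x) \<in> borel_measurable (lebesgue_on \<Omega>)"
      using fm indicator_box_meas by (rule borel_measurable_times)
    show "(\<lambda>x. f x * bumpf a b (real (Suc n)) x) \<in> borel_measurable (lebesgue_on \<Omega>)" for n
      using fm test_fun_meas[OF test_fun_bumpf[OF _ sub], of "real (Suc n)"] by (intro borel_measurable_times) auto
    show "integrable (lebesgue_on \<Omega>) (\<lambda>x. norm (f x))" using f by auto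
    show "AE x in lebesgue_on \<Omega>. (\<lambda>n. f x * bumpf a b (real (Suc n)) x) \<longlonglongrightarrow> f x * indicator (box a b) x"
      by (intro AE_I2 tendsto_mult tendsto_const bumpf_lim)
    show "AE x in lebesgue_on \<Omega>. norm (f x * bumpf a b (real (Suc n)) x) \<le> norm (f x)" for n
      using bumpf_bounds[of a b "real (Suc n)"]
      by (intro AE_I2) (simp add: abs_mult mult_left_le)
  qed
  moreover have "integral\<^sup>L (lebesgue_on \<Omega>) (\<lambda>x. f x * bumpf a b (real (Suc n)) x) = 0" for n
    by (rule orth, rule test_fun_bumpf[OF _ sub]) simp
  ultimately have "(\<lambda>n. 0) \<longlonglongrightarrow> integral\<^sup>L (lebesgue_on \<Omega>) (\<lambda>x. f x * indicator (box a b) x)"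
    by simp
  then show ?thesis by (rule LIMSEQ_unique[OF tendsto_const, symmetric])
qed

lemma boxs_lebesgue: "box a (b::real^'d) \<in> sets lebesgue"
  by (rule sets_completionI_sets) (simp add: borel_open)

lemma sets_borel_box: "sets (borel::(real^'d) measure) = sigma_sets UNIV (range (\<lambda>(a, b). box a b))"
proof -
  have "sets (borel::(real^'d) measure) = sets (sigma UNIV (range (\<lambda>(a, b). box a b :: (real^'d) set)))"
    using borel_eq_box by metis
  also have "\<dots> = sigma_sets UNIV (range (\<lambda>(a, b). box a b :: (real^'d) set))"
    by (rule sets_measure_of) auto
  finally show ?thesis .
qed

lemma box_Int_cart:
  fixes a b c d :: "real^'d"
  shows "box a b \<inter> box c d = box (\<chi> i. max (a$i) (c$i)) (\<chi> i. min (b$i) (d$i))"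
  by (auto simp: mem_box_cart)

lemma fund_small:
  fixes f :: "real^'d \<Rightarrow> real"
  assumes \<Omega>: "open \<Omega>" and f: "integrable (lebesgue_on \<Omega>) f"
    and orth: "\<And>\<phi>. test_fun \<Omega> \<phi> \<Longrightarrow> integral\<^sup>L (lebesgue_on \<Omega>) (\<lambda>x. f x * \<phi> x) = 0"
    and sub: "box c d \<subseteq> \<Omega>"
  shows "AE x in lebesgue. x \<in> box c d \<longrightarrow> f x = 0"
proof -
  have \<Omega>s: "\<Omega> \<in> sets lebesgue" by (rule open_sets_lebesgue[OF \<Omega>])
  have \<Omega>s': "\<Omega> \<inter> space lebesgue \<in> sets lebesgue" using \<Omega>s by simp
  define F where "F = (\<lambda>x. indicator \<Omega> x *\<^sub>R f x)"
  have F: "integrable lebesgue F" using f integrable_restrict_space[OF \<Omega>s', of f] unfolding F_def by simp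
  define G where "G = (\<lambda>x. indicator (box c d) x *\<^sub>R F x)"
  have G: "integrable lebesgue G" unfolding G_def by (rule integrable_mult_indicator[OF boxs_lebesgue F])
  have basicG: "set_lebesgue_integral lebesgue (box a b) G = 0" for a b
  proof -
    define m where "m = (\<chi> i. max (a$i) (c$i))"
    define M where "M = (\<chi> i. min (b$i) (d$i))"
    have int: "box a b \<inter> box c d = box m M" unfolding m_def M_def by (rule box_Int_cart)
    have "set_lebesgue_integral lebesgue (box a b) G = integral\<^sup>L lebesgue (\<lambda>x. indicator \<Omega> x *\<^sub>R (f x * indicator (box m M) x))"
      unfolding set_lebesgue_integral_def G_def F_def
      by (intro Bochner_Integration.integral_cong refl) (auto simp: int[symmetric] indicator_def)
    also have "\<dots> = integral\<^sup>L (lebesgue_on \<Omega>) (\<lambda>x. f x * indicator (box m M) x)"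
      using integral_restrict_space[OF \<Omega>s', of "\<lambda>x. f x * indicator (box m M) x"] by simp
    also have "\<dots> = 0" by (rule fund_box[OF \<Omega> f orth]) (use int sub in blast)+
    finally show ?thesis .
  qed
  have allG: "integral\<^sup>L lebesgue G = 0"
  proof -
    have "integral\<^sup>L lebesgue G = set_lebesgue_integral lebesgue (box c d) G"
      unfolding set_lebesgue_integral_def G_def by (intro Bochner_Integration.integral_cong) (auto simp: indicator_def)
    then show ?thesis using basicG by simp
  qed
  have sig_leb: "A \<in> sets lebesgue" if "A \<in> sigma_sets UNIV (range (\<lambda>(a, b). box a (b::real^'d)))" for A
    using that sets_borel_box by (metis sets_completionI_sets sets_lborel)
  have borel_sets: "set_lebesgue_integral lebesgue A G = 0" if A: "A \<in> sets borel" for A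
  proof -
    have ist: "Int_stable (range (\<lambda>(a, b). box a (b::real^'d)))"
    proof (unfold Int_stable_def, safe)
      fix a b c d :: "real^'d"
      show "box a b \<inter> box c d \<in> range (\<lambda>(a, b). box a b)"
        unfolding box_Int_cart by (rule image_eqI[where x="((\<chi> i. max (a$i) (c$i)), (\<chi> i. min (b$i) (d$i)))"]) auto
    qed
    have cl: "range (\<lambda>(a, b). box a (b::real^'d)) \<subseteq> Pow UNIV" by simp
    have "A \<in> sigma_sets UNIV (range (\<lambda>(a, b). box a b))" using A sets_borel_box by blast
    from ist cl this show ?thesis
    proof (induction rule: sigma_sets_induct_disjoint)
      case (basic A) then show ?case using basicG by auto
    next
      case empty then show ?case by (simp add: set_lebesgue_integral_def)
    next
      case (compl A)
      have As: "A \<in> sets lebesgue" using compl(1) by (rule sig_leb)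
      have "set_lebesgue_integral lebesgue (UNIV - A) G = integral\<^sup>L lebesgue (\<lambda>x. G x - indicator A x *\<^sub>R G x)"
        unfolding set_lebesgue_integral_def by (intro Bochner_Integration.integral_cong) (auto simp: indicator_def)
      also have "\<dots> = integral\<^sup>L lebesgue G - set_lebesgue_integral lebesgue A G"
        unfolding set_lebesgue_integral_def
        by (rule Bochner_Integration.integral_diff[OF G integrable_mult_indicator[OF As G]])
      finally show ?case using compl(2) allG by simp
    next
      case (union A)
      have As: "A i \<in> sets lebesgue" for i using union(2) sig_leb by auto
      have "(LINT x:(\<Union>i. A i)|lebesgue. G x) = (\<Sum>i. (LINT x:(A i)|lebesgue. G x))"
      proof (rule lebesgue_integral_countable_add)
        show "A i \<inter> A j = {}" if "i \<noteq> j" for i j using union(1) that unfolding disjoint_family_on_def by auto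
        show "set_integrable lebesgue (\<Union>i. A i) G"
          unfolding set_integrable_def by (rule integrable_mult_indicator[OF _ G]) (use As in auto)
      qed (use As in auto)
      then show ?case using union(3) by simp
    qed
  qed
  have all: "set_lebesgue_integral lebesgue A G = 0" if A: "A \<in> sets lebesgue" for A
  proof -
    obtain S N N' where SN: "A = S \<union> N" "N \<subseteq> N'" "N' \<in> null_sets lborel" "S \<in> sets lborel"
      using A by (auto simp: sets_completion)
    have Ss: "S \<in> sets lebesgue" using SN(4) by (rule sets_completionI_sets)
    have ae: "AE x in lebesgue. x \<notin> N'"
      by (rule AE_completion, rule AE_not_in[OF SN(3)])
    have "set_lebesgue_integral lebesgue A G = set_lebesgue_integral lebesgue S G"
      unfolding set_lebesgue_integral_def
    proof (rule integral_cong_AE)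
      show "(\<lambda>x. indicator A x *\<^sub>R G x) \<in> borel_measurable lebesgue"
        by (rule borel_measurable_integrable, rule integrable_mult_indicator[OF A G])
      show "(\<lambda>x. indicator S x *\<^sub>R G x) \<in> borel_measurable lebesgue"
        by (rule borel_measurable_integrable, rule integrable_mult_indicator[OF Ss G])
      show "AE x in lebesgue. indicator A x *\<^sub>R G x = indicator S x *\<^sub>R G x"
        using ae by eventually_elim (use SN in \<open>auto simp: indicator_def\<close>)
    qed
    also have "\<dots> = 0" using borel_sets SN(4) by simp
    finally show ?thesis .
  qed
  have "AE x in lebesgue. G x = (\<lambda>x. 0) x"
    by (rule density_unique_real[OF G integrable_zero]) (use all in \<open>simp add: set_lebesgue_integral_def\<close>)
  then show ?thesis
    by eventually_elim (use sub in \<open>auto simp: G_def F_def indicator_def\<close>)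
qed

lemma fund_real:
  fixes f :: "real^'d \<Rightarrow> real"
  assumes \<Omega>: "open \<Omega>" and f: "integrable (lebesgue_on \<Omega>) f"
    and orth: "\<And>\<phi>. test_fun \<Omega> \<phi> \<Longrightarrow> integral\<^sup>L (lebesgue_on \<Omega>) (\<lambda>x. f x * \<phi> x) = 0"
  shows "AE x in lebesgue_on \<Omega>. f x = 0"
proof -
  obtain D where D: "countable D" "D \<subseteq> Pow \<Omega>" "\<And>X. X \<in> D \<Longrightarrow> \<exists>a b. X = box a b" "\<Union>D = \<Omega>"
    using open_countable_Union_open_box[OF \<Omega>] by metis
  have "\<forall>X\<in>D. AE x in lebesgue. x \<in> X \<longrightarrow> f x = 0"
  proof
    fix X assume X: "X \<in> D"
    then obtain a b where "X = box a b" using D(3) by blast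
    then show "AE x in lebesgue. x \<in> X \<longrightarrow> f x = 0"
      using fund_small[OF \<Omega> f orth, of a b] D(2) X by auto
  qed
  then have "AE x in lebesgue. \<forall>X\<in>D. x \<in> X \<longrightarrow> f x = 0"
    by (subst AE_ball_countable[OF D(1)])
  then have "AE x in lebesgue. x \<in> \<Omega> \<longrightarrow> f x = 0"
    by eventually_elim (use D(4) in auto)
  then show ?thesis
    using AE_restrict_space_iff[of \<Omega> lebesgue] open_sets_lebesgue[OF \<Omega>] by simp
qed

lemma tsupport_subI: "closed S \<Longrightarrow> (\<And>x. g x \<noteq> 0 \<Longrightarrow> x \<in> S) \<Longrightarrow> tsupport g \<subseteq> S"
  unfolding tsupport_def by (rule closure_minimal) auto

lemma compact_tsupportI:
  assumes "compact K" "\<And>x. g x \<noteq> 0 \<Longrightarrow> x \<in> K"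
  shows "compact (tsupport g)"
proof -
  have "tsupport g \<subseteq> K" using assms by (intro tsupport_subI compact_imp_closed) auto
  moreover have "closed (tsupport g)" by (simp add: tsupport_def)
  ultimately show ?thesis using compact_Int_closed[OF assms(1)] by (metis inf.absorb2)
qed

lemma smooth_cont: "smooth_fun F \<Longrightarrow> continuous_on UNIV F"
proof -
  assume "smooth_fun F"
  then have "continuous_on UNIV (iter_partial [] F)" unfolding smooth_fun_def by blast
  then show ?thesis by simp
qed

lemma smooth_axdiff: "smooth_fun F \<Longrightarrow> axdiff F"
proof -
  assume "smooth_fun F"
  then have "axdiff (iter_partial [] F)" unfolding smooth_fun_alt by blast
  then show ?thesis by simp
qed

lemma cpartial_outside:
  assumes "x \<notin> tsupport F"
  shows "cpartial j F x = 0"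
proof -
  have "open (- tsupport F)" unfolding tsupport_def by (rule open_Compl, rule closed_closure)
  then obtain e where e: "e > 0" "ball x e \<subseteq> - tsupport F"
    using assms by (meson ComplI open_contains_ball)
  have z: "F (x + t *\<^sub>R axis j 1) = 0" if "t \<in> ball 0 e" for t
  proof -
    have "x + t *\<^sub>R axis j 1 \<in> ball x e" using that by (simp add: dist_norm)
    then show ?thesis using e(2) tsupport_nz[of F] by blast
  qed
  have "((\<lambda>t. 0) has_real_derivative 0) (at 0)" by simp
  then have "((\<lambda>t. F (x + t *\<^sub>R axis j 1)) has_real_derivative 0) (at 0)"
    by (rule has_field_derivative_transform_within_open[where S="ball 0 e"]) (use e z in auto)
  then show ?thesis by (rule cpartial_eqI)
qed

lemma tsupport_cpartial: "tsupport (cpartial j F) \<subseteq> tsupport F"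
proof (rule tsupport_subI)
  show "closed (tsupport F)" by (simp add: tsupport_def)
  show "x \<in> tsupport F" if "cpartial j F x \<noteq> 0" for x using cpartial_outside[of x F j] that by blast
qed

lemma cont_cs_integrable:
  fixes g :: "real^'d \<Rightarrow> real"
  assumes "continuous_on UNIV g" "compact (tsupport g)"
  shows "integrable lborel g"
proof -
  have "integrable lborel (\<lambda>x. indicator (tsupport g) x *\<^sub>R g x)"
    by (rule borel_integrable_compact[OF assms(2)]) (use assms(1) continuous_on_subset in blast)
  moreover have "(\<lambda>x. indicator (tsupport g) x *\<^sub>R g x) = g"
  proof
    fix x show "indicator (tsupport g) x *\<^sub>R g x = g x"
      using tsupport_nz[of g x] by (cases "g x = 0") (auto simp: indicator_def)
  qed
  ultimately show ?thesis by simp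
qed

lemma ibp_core:
  fixes F :: "real^'d \<Rightarrow> real"
  assumes F: "smooth_fun F" and K: "compact (tsupport F)"
  shows "integral\<^sup>L lborel (cpartial j F) = 0"
proof -
  define e :: "real^'d" where "e = axis j 1"
  have Fc: "continuous_on UNIV F" by (rule smooth_cont[OF F])
  have Fa: "axdiff F" by (rule smooth_axdiff[OF F])
  have dFc: "continuous_on UNIV (cpartial j F)" by (rule smooth_cont[OF smooth_cpartial[OF F]])
  have dK: "compact (tsupport (cpartial j F))"
    by (rule compact_tsupportI[OF K]) (use tsupport_cpartial[of j F] tsupport_nz[of "cpartial j F"] in blast)
  obtain M where M: "\<And>x. \<bar>cpartial j F x\<bar> \<le> M"
    using cont_compact_support_bounded[OF dFc dK] by blast
  obtain r where r: "\<forall>x\<in>tsupport F. norm x \<le> r"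
    using compact_imp_bounded[OF K] unfolding bounded_pos by auto
  have Fm: "F \<in> borel_measurable borel" by (rule borel_measurable_continuous_onI[OF Fc])
  have Fi: "integrable lborel F" by (rule cont_cs_integrable[OF Fc K])
  define h where "h n = inverse (real (Suc n))" for n
  have hpos: "0 < h n" "h n \<le> 1" for n by (auto simp: h_def field_simps)
  define Q where "Q n x = (F (x + h n *\<^sub>R e) - F x) / h n" for n x
  have shift: "integral\<^sup>L lborel (\<lambda>x. F (x + c)) = integral\<^sup>L lborel F" for c
  proof -
    have "integral\<^sup>L lborel (\<lambda>x. F (x + c)) = integral\<^sup>L lborel (\<lambda>x. F (c + x))"
      by (simp add: add.commute)
    also have "\<dots> = integral\<^sup>L (distr lborel borel ((+) c)) F"
      by (rule integral_distr[symmetric]) (auto intro: Fm)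
    also have "\<dots> = integral\<^sup>L lborel F" by (simp add: lborel_distr_plus)
    finally show ?thesis .
  qed
  have shifti: "integrable lborel (\<lambda>x. F (x + c))" for c
  proof -
    have "integrable (distr lborel borel ((+) c)) F" using Fi by (simp add: lborel_distr_plus)
    then have "integrable lborel (\<lambda>x. F (c + x))"
      by (subst (asm) integrable_distr_eq) (auto intro: Fm)
    then show ?thesis by (simp add: add.commute)
  qed
  have Q0: "integral\<^sup>L lborel (Q n) = 0" for n
  proof -
    have "integral\<^sup>L lborel (Q n) = integral\<^sup>L lborel (\<lambda>x. F (x + h n *\<^sub>R e) - F x) / h n"
      unfolding Q_def by (rule integral_divide_zero)
    also have "integral\<^sup>L lborel (\<lambda>x. F (x + h n *\<^sub>R e) - F x) = 0"
      using Bochner_Integration.integral_diff[OF shifti Fi, of "h n *\<^sub>R e"] shift[of "h n *\<^sub>R e"] by (simp only: diff_self)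
    then have "integral\<^sup>L lborel (\<lambda>x. F (x + h n *\<^sub>R e) - F x) / h n = 0" by (simp only: div_0)
    finally show ?thesis .
  qed
  have "(\<lambda>n. integral\<^sup>L lborel (Q n)) \<longlonglongrightarrow> integral\<^sup>L lborel (cpartial j F)"
  proof (rule integral_dominated_convergence[where w="\<lambda>x. M * indicator (cball 0 (r + 1)) x"])
    show "cpartial j F \<in> borel_measurable lborel"
      using borel_measurable_continuous_onI[OF dFc] by simp
    show "Q n \<in> borel_measurable lborel" for n
    proof -
      have "continuous_on UNIV (\<lambda>x. (F (x + h n *\<^sub>R e) - F x) / h n)"
        by (intro continuous_intros continuous_on_compose2[OF Fc]) (use hpos(1)[of n] in auto)
      then show ?thesis unfolding Q_def[abs_def] using borel_measurable_continuous_onI by simp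
    qed
    show "integrable lborel (\<lambda>x. M * indicator (cball 0 (r + 1)) x)"
    proof -
      have "integrable lborel (\<lambda>x. indicator (cball 0 (r + 1)) x *\<^sub>R M)"
        by (rule borel_integrable_compact) auto
      then show ?thesis by (simp add: mult.commute)
    qed
    show "AE x in lborel. (\<lambda>n. Q n x) \<longlonglongrightarrow> cpartial j F x"
    proof (rule AE_I2)
      fix x
      have d: "((\<lambda>t. (F (x + t *\<^sub>R e) - F x) / (t - 0)) \<longlongrightarrow> cpartial j F x) (at 0)"
        using axdiffD[OF Fa, of x j] unfolding has_field_derivative_iff e_def by simp
      have hl: "filterlim h (at 0) sequentially"
        unfolding h_def[abs_def] by (rule filterlim_atI[OF LIMSEQ_inverse_real_of_nat]) simp
      show "(\<lambda>n. Q n x) \<longlonglongrightarrow> cpartial j F x"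
        using filterlim_compose[OF d hl] unfolding Q_def by simp
    qed
    show "AE x in lborel. norm (Q n x) \<le> M * indicator (cball 0 (r + 1)) x" for n
    proof (rule AE_I2)
      fix x
      show "norm (Q n x) \<le> M * indicator (cball 0 (r + 1)) x"
      proof (cases "x \<in> cball 0 (r + 1)")
        case True
        have "\<exists>z. 0 < z \<and> z < h n \<and> F (x + h n *\<^sub>R e) - F (x + 0 *\<^sub>R e) = (h n - 0) * cpartial j F (x + z *\<^sub>R e)"
          by (rule MVT2[OF hpos(1)]) (use axdiff_shift[OF Fa] in \<open>auto simp: e_def\<close>)
        then obtain z where "F (x + h n *\<^sub>R e) - F x = h n * cpartial j F (x + z *\<^sub>R e)" by auto
        then have "Q n x = cpartial j F (x + z *\<^sub>R e)" unfolding Q_def using hpos(1)[of n] by simp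
        then show ?thesis using True M by simp
      next
        case False
        then have nx: "norm x > r + 1" by simp
        have "norm (x + h n *\<^sub>R e) \<ge> norm x - norm (h n *\<^sub>R e)" by (metis norm_diff_ineq norm_minus_cancel diff_minus_eq_add)
        moreover have "norm (h n *\<^sub>R e) \<le> 1" using hpos[of n] by (simp add: e_def)
        ultimately have "norm (x + h n *\<^sub>R e) > r" using nx by linarith
        have "F (x + h n *\<^sub>R e) = 0"
        proof (rule ccontr)
          assume "F (x + h n *\<^sub>R e) \<noteq> 0"
          then have "norm (x + h n *\<^sub>R e) \<le> r" using r tsupport_nz[of F] by blast
          then show False using \<open>norm (x + h n *\<^sub>R e) > r\<close> by simp
        qed
        moreover have "F x = 0"
        proof (rule ccontr)
          assume "F x \<noteq> 0"
          then have "norm x \<le> r" using r tsupport_nz[of F] by blast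
          then show False using nx by simp
        qed
        ultimately show ?thesis using False by (simp add: Q_def)
      qed
    qed
  qed
  then have "(\<lambda>n. 0) \<longlonglongrightarrow> integral\<^sup>L lborel (cpartial j F)" using Q0 by simp
  then show ?thesis by (rule LIMSEQ_unique[OF tendsto_const, symmetric])
qed


lemma real_le_1_plus_sq: "(t::real) \<le> 1 + t\<^sup>2"
proof -
  have "0 \<le> (t - 1)\<^sup>2" by simp
  then have "0 \<le> t\<^sup>2 - 2 * t + 1" by (simp add: power2_eq_square algebra_simps)
  then show ?thesis by (cases "t \<ge> 0") (auto simp: power2_eq_square, smt (verit) zero_le_square)
qed

lemma real_prod_le_sq: "(s::real) * t \<le> s\<^sup>2 + t\<^sup>2" if "0 \<le> s" "0 \<le> t"
proof -
  have "0 \<le> (s - t)\<^sup>2" by simp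
  then have "2 * (s * t) \<le> s\<^sup>2 + t\<^sup>2" by (simp add: power2_eq_square algebra_simps)
  moreover have "0 \<le> s * t" using that by simp
  ultimately show ?thesis by linarith
qed

lemma real_2prod_le_sq: "2 * ((s::real) * t) \<le> s\<^sup>2 + t\<^sup>2"
proof -
  have "0 \<le> (s - t)\<^sup>2" by simp
  then show ?thesis by (simp add: power2_eq_square algebra_simps)
qed

lemma meas_cnj[measurable]: "g \<in> borel_measurable M \<Longrightarrow> (\<lambda>x. cnj (g x)) \<in> borel_measurable M"
  by (rule borel_measurable_continuous_on[where f=cnj]) (auto intro: continuous_intros)

lemma cmod_lin_sq: "(cmod (a * x + b * y))\<^sup>2 \<le> 2 * (cmod a)\<^sup>2 * (cmod x)\<^sup>2 + 2 * (cmod b)\<^sup>2 * (cmod y)\<^sup>2"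
proof -
  have "cmod (a * x + b * y) \<le> cmod a * cmod x + cmod b * cmod y"
    by (metis norm_mult norm_triangle_ineq)
  then have "(cmod (a * x + b * y))\<^sup>2 \<le> (cmod a * cmod x + cmod b * cmod y)\<^sup>2"
    by (simp add: power_mono)
  also have "\<dots> \<le> 2 * (cmod a * cmod x)\<^sup>2 + 2 * (cmod b * cmod y)\<^sup>2"
    using real_2prod_le_sq[of "cmod a * cmod x" "cmod b * cmod y"] by (simp add: power2_eq_square algebra_simps)
  finally show ?thesis by (simp add: power_mult_distrib)
qed

lemma test_fun_cpartial: "test_fun \<Omega> \<phi> \<Longrightarrow> test_fun \<Omega> (cpartial j \<phi>)"
  unfolding test_fun_def
proof (elim conjE, intro conjI)
  assume s: "smooth_fun \<phi>" and c: "compact (tsupport \<phi>)" and sub: "tsupport \<phi> \<subseteq> \<Omega>"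
  show "smooth_fun (cpartial j \<phi>)" by (rule smooth_cpartial[OF s])
  show "compact (tsupport (cpartial j \<phi>))"
    by (rule compact_tsupportI[OF c]) (use tsupport_cpartial[of j \<phi>] tsupport_nz[of "cpartial j \<phi>"] in blast)
  show "tsupport (cpartial j \<phi>) \<subseteq> \<Omega>" using tsupport_cpartial[of j \<phi>] sub by blast
qed

lemma test_fun_mult: "test_fun \<Omega> \<phi> \<Longrightarrow> test_fun \<Omega> \<psi> \<Longrightarrow> test_fun \<Omega> (\<lambda>x. \<phi> x * \<psi> x)"
  unfolding test_fun_def
proof (elim conjE, intro conjI)
  assume s: "smooth_fun \<phi>" "smooth_fun \<psi>" and c: "compact (tsupport \<phi>)" and sub: "tsupport \<phi> \<subseteq> \<Omega>"
  show "smooth_fun (\<lambda>x. \<phi> x * \<psi> x)" by (rule smooth_mult[OF s])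
  have nz: "x \<in> tsupport \<phi>" if "\<phi> x * \<psi> x \<noteq> 0" for x using that tsupport_nz[of \<phi> x] by auto
  show "compact (tsupport (\<lambda>x. \<phi> x * \<psi> x))"
    by (rule compact_tsupportI[OF c]) (use nz in blast)
  have "tsupport (\<lambda>x. \<phi> x * \<psi> x) \<subseteq> tsupport \<phi>"
    by (rule tsupport_subI) (use nz in \<open>auto simp: tsupport_def\<close>)
  then show "tsupport (\<lambda>x. \<phi> x * \<psi> x) \<subseteq> \<Omega>" using sub by blast
qed

lemma test_fun_add: "test_fun \<Omega> \<phi> \<Longrightarrow> test_fun \<Omega> \<psi> \<Longrightarrow> test_fun \<Omega> (\<lambda>x. \<phi> x + \<psi> x)"
  unfolding test_fun_def
proof (elim conjE, intro conjI)
  assume s: "smooth_fun \<phi>" "smooth_fun \<psi>" and c: "compact (tsupport \<phi>)" "compact (tsupport \<psi>)"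
    and sub: "tsupport \<phi> \<subseteq> \<Omega>" "tsupport \<psi> \<subseteq> \<Omega>"
  show "smooth_fun (\<lambda>x. \<phi> x + \<psi> x)" by (rule smooth_add[OF s])
  have nz: "x \<in> tsupport \<phi> \<union> tsupport \<psi>" if "\<phi> x + \<psi> x \<noteq> 0" for x
    using that tsupport_nz[of \<phi> x] tsupport_nz[of \<psi> x] by (cases "\<phi> x = 0") auto
  show "compact (tsupport (\<lambda>x. \<phi> x + \<psi> x))"
    by (rule compact_tsupportI[OF compact_Un[OF c]]) (use nz in blast)
  have "tsupport (\<lambda>x. \<phi> x + \<psi> x) \<subseteq> tsupport \<phi> \<union> tsupport \<psi>"
    by (rule tsupport_subI) (use nz in \<open>auto simp: tsupport_def\<close>)
  then show "tsupport (\<lambda>x. \<phi> x + \<psi> x) \<subseteq> \<Omega>" using sub by blast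
qed

lemma test_fun_scale: "test_fun \<Omega> \<phi> \<Longrightarrow> test_fun \<Omega> (\<lambda>x. c * \<phi> x)"
  unfolding test_fun_def
proof (elim conjE, intro conjI)
  assume s: "smooth_fun \<phi>" and c: "compact (tsupport \<phi>)" and sub: "tsupport \<phi> \<subseteq> \<Omega>"
  show "smooth_fun (\<lambda>x. c * \<phi> x)" by (rule smooth_scale[OF s])
  have nz: "x \<in> tsupport \<phi>" if "c * \<phi> x \<noteq> 0" for x using that tsupport_nz[of \<phi> x] by auto
  show "compact (tsupport (\<lambda>x. c * \<phi> x))"
    by (rule compact_tsupportI[OF c]) (use nz in blast)
  have "tsupport (\<lambda>x. c * \<phi> x) \<subseteq> tsupport \<phi>"
    by (rule tsupport_subI) (use nz in \<open>auto simp: tsupport_def\<close>)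
  then show "tsupport (\<lambda>x. c * \<phi> x) \<subseteq> \<Omega>" using sub by blast
qed

locale bdom =
  fixes \<Omega> :: "(real^'d) set"
  assumes op: "open \<Omega>" and bd: "bounded \<Omega>"
begin

lemma \<Omega>s: "\<Omega> \<in> sets lebesgue" by (rule open_sets_lebesgue[OF op])
lemma \<Omega>s': "\<Omega> \<inter> space lebesgue \<in> sets lebesgue" using \<Omega>s by simp

lemma fin: "finite_measure (lebesgue_on \<Omega>)"
  by (rule finite_measure_lebesgue_on, rule bounded_set_imp_lmeasurable[OF bd \<Omega>s])

lemma int_const: "integrable (lebesgue_on \<Omega>) (\<lambda>x. c::real)"
  using finite_measure.integrable_const[OF fin] by blast

lemma L2_meas: "L2 \<Omega> f \<Longrightarrow> f \<in> borel_measurable (lebesgue_on \<Omega>)"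
  unfolding L2_def by blast

lemma L2_sq_int: "L2 \<Omega> f \<Longrightarrow> integrable (lebesgue_on \<Omega>) (\<lambda>x. (cmod (f x))\<^sup>2)"
  unfolding L2_def by blast

lemma L2_int: "L2 \<Omega> f \<Longrightarrow> integrable (lebesgue_on \<Omega>) f"
proof -
  assume f: "L2 \<Omega> f"
  have "integrable (lebesgue_on \<Omega>) (\<lambda>x. 1 + (cmod (f x))\<^sup>2)"
    by (rule Bochner_Integration.integrable_add[OF int_const L2_sq_int[OF f]])
  then show ?thesis
    by (rule Bochner_Integration.integrable_bound[OF _ L2_meas[OF f]]) (auto intro!: AE_I2 real_le_1_plus_sq)
qed

lemma L2_prod_int:
  assumes f: "L2 \<Omega> f" and g: "L2 \<Omega> g"
  shows "integrable (lebesgue_on \<Omega>) (\<lambda>x. f x * cnj (g x))"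
proof -
  have "integrable (lebesgue_on \<Omega>) (\<lambda>x. (cmod (f x))\<^sup>2 + (cmod (g x))\<^sup>2)"
    by (rule Bochner_Integration.integrable_add[OF L2_sq_int[OF f] L2_sq_int[OF g]])
  moreover have "(\<lambda>x. f x * cnj (g x)) \<in> borel_measurable (lebesgue_on \<Omega>)"
    using L2_meas[OF f] L2_meas[OF g] by measurable
  ultimately show ?thesis
    by (rule Bochner_Integration.integrable_bound) (auto intro!: AE_I2 real_prod_le_sq simp: norm_mult)
qed

lemma L2_lin:
  assumes f: "L2 \<Omega> f" and g: "L2 \<Omega> g"
  shows "L2 \<Omega> (\<lambda>x. a * f x + b * g x)"
  unfolding L2_def
proof
  show m: "(\<lambda>x. a * f x + b * g x) \<in> borel_measurable (lebesgue_on \<Omega>)"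
    using L2_meas[OF f] L2_meas[OF g] by measurable
  have "integrable (lebesgue_on \<Omega>) (\<lambda>x. 2 * (cmod a)\<^sup>2 * (cmod (f x))\<^sup>2 + 2 * (cmod b)\<^sup>2 * (cmod (g x))\<^sup>2)"
    using L2_sq_int[OF f] L2_sq_int[OF g] by (intro Bochner_Integration.integrable_add integrable_mult_right)
  then show "integrable (lebesgue_on \<Omega>) (\<lambda>x. (cmod (a * f x + b * g x))\<^sup>2)"
    by (rule Bochner_Integration.integrable_bound) (use m in \<open>auto intro!: AE_I2 cmod_lin_sq\<close>)
qed

lemma L2_test: "test_fun \<Omega> \<phi> \<Longrightarrow> L2 \<Omega> (\<lambda>x. complex_of_real (\<phi> x))"
  unfolding L2_def
proof
  assume t: "test_fun \<Omega> \<phi>"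
  show m: "(\<lambda>x. complex_of_real (\<phi> x)) \<in> borel_measurable (lebesgue_on \<Omega>)"
    using test_fun_meas[OF t, of \<Omega>] by measurable
  obtain B where B: "\<And>x. \<bar>\<phi> x\<bar> \<le> B" using test_fun_bounded[OF t] by blast
  have B2: "(cmod (complex_of_real (\<phi> x)))\<^sup>2 \<le> B\<^sup>2" for x
  proof -
    have "\<bar>\<phi> x\<bar> \<le> \<bar>B\<bar>" using B[of x] by auto
    then show ?thesis by (simp add: abs_le_square_iff)
  qed
  have m2: "(\<lambda>x. (cmod (complex_of_real (\<phi> x)))\<^sup>2) \<in> borel_measurable (lebesgue_on \<Omega>)"
    using m by measurable
  show "integrable (lebesgue_on \<Omega>) (\<lambda>x. (cmod (complex_of_real (\<phi> x)))\<^sup>2)"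
    by (rule Bochner_Integration.integrable_bound[OF int_const[of "B\<^sup>2"] m2]) (use B2 in \<open>auto intro!: AE_I2\<close>)
qed

lemma L2_test_int: "L2 \<Omega> f \<Longrightarrow> test_fun \<Omega> \<phi> \<Longrightarrow> integrable (lebesgue_on \<Omega>) (\<lambda>x. f x * complex_of_real (\<phi> x))"
  using L2_prod_int[OF _ L2_test, of f \<phi>] by simp

lemma sL2ip_lin:
  assumes f: "L2 \<Omega> f" and g: "L2 \<Omega> g" and h: "L2 \<Omega> h"
  shows "sL2ip \<Omega> (\<lambda>x. a * f x + b * g x) h = a * sL2ip \<Omega> f h + b * sL2ip \<Omega> g h"
proof -
  have "sL2ip \<Omega> (\<lambda>x. a * f x + b * g x) h = integral\<^sup>L (lebesgue_on \<Omega>) (\<lambda>x. a * (f x * cnj (h x)) + b * (g x * cnj (h x)))"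
    unfolding sL2ip_def by (simp add: algebra_simps)
  also have "\<dots> = integral\<^sup>L (lebesgue_on \<Omega>) (\<lambda>x. a * (f x * cnj (h x))) + integral\<^sup>L (lebesgue_on \<Omega>) (\<lambda>x. b * (g x * cnj (h x)))"
    by (rule Bochner_Integration.integral_add) (use L2_prod_int[OF f h] L2_prod_int[OF g h] in auto)
  finally show ?thesis unfolding sL2ip_def by simp
qed

lemma sL2ip_cnj: "sL2ip \<Omega> g f = cnj (sL2ip \<Omega> f g)"
proof -
  have "sL2ip \<Omega> g f = integral\<^sup>L (lebesgue_on \<Omega>) (\<lambda>x. cnj (f x * cnj (g x)))"
    unfolding sL2ip_def by (rule Bochner_Integration.integral_cong) (auto simp: mult.commute)
  also have "\<dots> = cnj (sL2ip \<Omega> f g)" unfolding sL2ip_def by (rule Bochner_Integration.integral_cnj)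
  finally show ?thesis .
qed

lemma sL2ip_self: "sL2ip \<Omega> f f = complex_of_real (integral\<^sup>L (lebesgue_on \<Omega>) (\<lambda>x. (cmod (f x))\<^sup>2))"
  unfolding sL2ip_def by (simp only: integral_complex_of_real[symmetric] complex_norm_square)

lemma sL2ip_self_ge: "0 \<le> integral\<^sup>L (lebesgue_on \<Omega>) (\<lambda>x. (cmod (f x))\<^sup>2)"
  by (rule Bochner_Integration.integral_nonneg) simp

lemma sL2ip_AE:
  assumes "AE x in lebesgue_on \<Omega>. f x = f' x" "L2 \<Omega> f" "L2 \<Omega> f'" "L2 \<Omega> g"
  shows "sL2ip \<Omega> f g = sL2ip \<Omega> f' g"
  unfolding sL2ip_def
  by (rule integral_cong_AE) (use assms L2_prod_int in auto)

lemma wp_unique: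
  assumes g1: "L2 \<Omega> g1" and g2: "L2 \<Omega> g2"
    and w1: "is_weak_partial \<Omega> j f g1" and w2: "is_weak_partial \<Omega> j f g2"
  shows "AE x in lebesgue_on \<Omega>. g1 x = g2 x"
proof -
  define h where "h x = g1 x - g2 x" for x
  have hL2: "L2 \<Omega> h" using L2_lin[OF g1 g2, of 1 "-1"] by (simp add: h_def[abs_def])
  have hint: "integrable (lebesgue_on \<Omega>) h" by (rule L2_int[OF hL2])
  have orth: "integral\<^sup>L (lebesgue_on \<Omega>) (\<lambda>x. h x * complex_of_real (\<phi> x)) = 0" if t: "test_fun \<Omega> \<phi>" for \<phi>
  proof -
    have "integral\<^sup>L (lebesgue_on \<Omega>) (\<lambda>x. h x * complex_of_real (\<phi> x))
        = integral\<^sup>L (lebesgue_on \<Omega>) (\<lambda>x. g1 x * complex_of_real (\<phi> x) - g2 x * complex_of_real (\<phi> x))"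
      unfolding h_def by (simp add: left_diff_distrib)
    also have "\<dots> = integral\<^sup>L (lebesgue_on \<Omega>) (\<lambda>x. g1 x * complex_of_real (\<phi> x)) - integral\<^sup>L (lebesgue_on \<Omega>) (\<lambda>x. g2 x * complex_of_real (\<phi> x))"
      by (rule Bochner_Integration.integral_diff[OF L2_test_int[OF g1 t] L2_test_int[OF g2 t]])
    also have "\<dots> = 0"
      using w1[unfolded is_weak_partial_def, rule_format, OF t] w2[unfolded is_weak_partial_def, rule_format, OF t] by simp
    finally show ?thesis .
  qed
  have hpi: "integrable (lebesgue_on \<Omega>) (\<lambda>x. h x * complex_of_real (\<phi> x))" if "test_fun \<Omega> \<phi>" for \<phi>
    by (rule L2_test_int[OF hL2 that])
  have re: "AE x in lebesgue_on \<Omega>. Re (h x) = 0"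
  proof (rule fund_real[OF op])
    show "integrable (lebesgue_on \<Omega>) (\<lambda>x. Re (h x))" using hint by auto
    fix \<phi> assume t: "test_fun \<Omega> \<phi>"
    have "integral\<^sup>L (lebesgue_on \<Omega>) (\<lambda>x. Re (h x) * \<phi> x) = integral\<^sup>L (lebesgue_on \<Omega>) (\<lambda>x. Re (h x * complex_of_real (\<phi> x)))"
      by simp
    also have "\<dots> = Re (integral\<^sup>L (lebesgue_on \<Omega>) (\<lambda>x. h x * complex_of_real (\<phi> x)))"
      by (rule integral_Re[OF hpi[OF t]])
    finally show "integral\<^sup>L (lebesgue_on \<Omega>) (\<lambda>x. Re (h x) * \<phi> x) = 0" using orth[OF t] by simp
  qed
  have im: "AE x in lebesgue_on \<Omega>. Im (h x) = 0"
  proof (rule fund_real[OF op])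
    show "integrable (lebesgue_on \<Omega>) (\<lambda>x. Im (h x))" using hint by auto
    fix \<phi> assume t: "test_fun \<Omega> \<phi>"
    have "integral\<^sup>L (lebesgue_on \<Omega>) (\<lambda>x. Im (h x) * \<phi> x) = integral\<^sup>L (lebesgue_on \<Omega>) (\<lambda>x. Im (h x * complex_of_real (\<phi> x)))"
      by simp
    also have "\<dots> = Im (integral\<^sup>L (lebesgue_on \<Omega>) (\<lambda>x. h x * complex_of_real (\<phi> x)))"
      by (rule integral_Im[OF hpi[OF t]])
    finally show "integral\<^sup>L (lebesgue_on \<Omega>) (\<lambda>x. Im (h x) * \<phi> x) = 0" using orth[OF t] by simp
  qed
  from re im show ?thesis
    by eventually_elim (simp add: h_def complex_eq_iff)
qed

lemma wp_lin:
  assumes f1: "L2 \<Omega> f1" and f2: "L2 \<Omega> f2" and g1: "L2 \<Omega> g1" and g2: "L2 \<Omega> g2"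
    and w1: "is_weak_partial \<Omega> j f1 g1" and w2: "is_weak_partial \<Omega> j f2 g2"
  shows "is_weak_partial \<Omega> j (\<lambda>x. a * f1 x + b * f2 x) (\<lambda>x. a * g1 x + b * g2 x)"
  unfolding is_weak_partial_def
proof (intro allI impI)
  fix \<phi> assume t: "test_fun \<Omega> \<phi>"
  have t': "test_fun \<Omega> (cpartial j \<phi>)" by (rule test_fun_cpartial[OF t])
  have "integral\<^sup>L (lebesgue_on \<Omega>) (\<lambda>x. (a * f1 x + b * f2 x) * complex_of_real (cpartial j \<phi> x))
      = integral\<^sup>L (lebesgue_on \<Omega>) (\<lambda>x. a * (f1 x * complex_of_real (cpartial j \<phi> x)) + b * (f2 x * complex_of_real (cpartial j \<phi> x)))"
    by (simp add: algebra_simps)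
  also have "\<dots> = a * integral\<^sup>L (lebesgue_on \<Omega>) (\<lambda>x. f1 x * complex_of_real (cpartial j \<phi> x)) + b * integral\<^sup>L (lebesgue_on \<Omega>) (\<lambda>x. f2 x * complex_of_real (cpartial j \<phi> x))"
    using L2_test_int[OF f1 t'] L2_test_int[OF f2 t'] by (subst Bochner_Integration.integral_add) auto
  also have "\<dots> = - (a * integral\<^sup>L (lebesgue_on \<Omega>) (\<lambda>x. g1 x * complex_of_real (\<phi> x)) + b * integral\<^sup>L (lebesgue_on \<Omega>) (\<lambda>x. g2 x * complex_of_real (\<phi> x)))"
    using w1[unfolded is_weak_partial_def, rule_format, OF t] w2[unfolded is_weak_partial_def, rule_format, OF t] by simp
  also have "a * integral\<^sup>L (lebesgue_on \<Omega>) (\<lambda>x. g1 x * complex_of_real (\<phi> x)) + b * integral\<^sup>L (lebesgue_on \<Omega>) (\<lambda>x. g2 x * complex_of_real (\<phi> x))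
      = integral\<^sup>L (lebesgue_on \<Omega>) (\<lambda>x. a * (g1 x * complex_of_real (\<phi> x)) + b * (g2 x * complex_of_real (\<phi> x)))"
    using L2_test_int[OF g1 t] L2_test_int[OF g2 t] by (subst Bochner_Integration.integral_add) auto
  also have "\<dots> = integral\<^sup>L (lebesgue_on \<Omega>) (\<lambda>x. (a * g1 x + b * g2 x) * complex_of_real (\<phi> x))"
    by (simp add: algebra_simps)
  finally show "integral\<^sup>L (lebesgue_on \<Omega>) (\<lambda>x. (a * f1 x + b * f2 x) * complex_of_real (cpartial j \<phi> x)) =
      - integral\<^sup>L (lebesgue_on \<Omega>) (\<lambda>x. (a * g1 x + b * g2 x) * complex_of_real (\<phi> x))" .
qed

lemma wpartial_prop:
  assumes "H1 \<Omega> f"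
  shows "L2 \<Omega> (wpartial \<Omega> j f) \<and> is_weak_partial \<Omega> j f (wpartial \<Omega> j f)"
proof -
  from assms have "\<exists>g. L2 \<Omega> g \<and> is_weak_partial \<Omega> j f g" unfolding H1_def by blast
  then show ?thesis unfolding wpartial_def by (rule someI_ex)
qed

lemma H1_L2: "H1 \<Omega> f \<Longrightarrow> L2 \<Omega> f" unfolding H1_def by blast

lemma H1_lin:
  assumes "H1 \<Omega> f1" "H1 \<Omega> f2"
  shows "H1 \<Omega> (\<lambda>x. a * f1 x + b * f2 x)"
  unfolding H1_def
proof (intro conjI allI)
  show "L2 \<Omega> (\<lambda>x. a * f1 x + b * f2 x)" by (rule L2_lin[OF H1_L2[OF assms(1)] H1_L2[OF assms(2)]])
  fix j
  show "\<exists>g. L2 \<Omega> g \<and> is_weak_partial \<Omega> j (\<lambda>x. a * f1 x + b * f2 x) g"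
  proof -
    have p1: "L2 \<Omega> (wpartial \<Omega> j f1)" "is_weak_partial \<Omega> j f1 (wpartial \<Omega> j f1)" using wpartial_prop[OF assms(1)] by auto
    have p2: "L2 \<Omega> (wpartial \<Omega> j f2)" "is_weak_partial \<Omega> j f2 (wpartial \<Omega> j f2)" using wpartial_prop[OF assms(2)] by auto
    show ?thesis
      by (intro exI[of _ "\<lambda>x. a * wpartial \<Omega> j f1 x + b * wpartial \<Omega> j f2 x"] conjI L2_lin[OF p1(1) p2(1)]
          wp_lin[OF H1_L2[OF assms(1)] H1_L2[OF assms(2)] p1(1) p2(1) p1(2) p2(2)])
  qed
qed

lemma wpartial_lin:
  assumes "H1 \<Omega> f1" "H1 \<Omega> f2"
  shows "AE x in lebesgue_on \<Omega>. wpartial \<Omega> j (\<lambda>x. a * f1 x + b * f2 x) x = a * wpartial \<Omega> j f1 x + b * wpartial \<Omega> j f2 x"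
proof -
  have p1: "L2 \<Omega> (wpartial \<Omega> j f1)" "is_weak_partial \<Omega> j f1 (wpartial \<Omega> j f1)" using wpartial_prop[OF assms(1)] by auto
  have p2: "L2 \<Omega> (wpartial \<Omega> j f2)" "is_weak_partial \<Omega> j f2 (wpartial \<Omega> j f2)" using wpartial_prop[OF assms(2)] by auto
  have p: "L2 \<Omega> (wpartial \<Omega> j (\<lambda>x. a * f1 x + b * f2 x))" "is_weak_partial \<Omega> j (\<lambda>x. a * f1 x + b * f2 x) (wpartial \<Omega> j (\<lambda>x. a * f1 x + b * f2 x))"
    using wpartial_prop[OF H1_lin[OF assms]] by auto
  show ?thesis
    by (rule wp_unique[OF p(1) L2_lin[OF p1(1) p2(1)] p(2) wp_lin[OF H1_L2[OF assms(1)] H1_L2[OF assms(2)] p1(1) p2(1) p1(2) p2(2)]])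
qed

lemma int_on_omega:
  assumes t: "test_fun \<Omega> g"
  shows "integral\<^sup>L (lebesgue_on \<Omega>) g = integral\<^sup>L lborel g"
proof -
  have gm: "g \<in> borel_measurable lborel" using borel_measurable_continuous_onI[OF test_fun_cont[OF t]] by simp
  have "integral\<^sup>L (lebesgue_on \<Omega>) g = integral\<^sup>L lebesgue (\<lambda>x. indicator \<Omega> x *\<^sub>R g x)"
    by (rule integral_restrict_space[OF \<Omega>s'])
  also have "\<dots> = integral\<^sup>L lebesgue g"
  proof (rule Bochner_Integration.integral_cong[OF refl])
    fix x show "indicator \<Omega> x *\<^sub>R g x = g x"
      using tsupport_nz[of g x] t unfolding test_fun_def by (cases "g x = 0") (auto simp: indicator_def)
  qed
  also have "\<dots> = integral\<^sup>L lborel g" by (rule integral_completion[OF gm])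
  finally show ?thesis .
qed

lemma ibp_omega:
  assumes p: "test_fun \<Omega> p" and t: "test_fun \<Omega> \<phi>"
  shows "integral\<^sup>L (lebesgue_on \<Omega>) (\<lambda>x. p x * cpartial j \<phi> x) = - integral\<^sup>L (lebesgue_on \<Omega>) (\<lambda>x. cpartial j p x * \<phi> x)"
proof -
  have F: "test_fun \<Omega> (\<lambda>x. p x * \<phi> x)" by (rule test_fun_mult[OF p t])
  have A: "test_fun \<Omega> (\<lambda>x. cpartial j p x * \<phi> x)" by (rule test_fun_mult[OF test_fun_cpartial[OF p] t])
  have B: "test_fun \<Omega> (\<lambda>x. p x * cpartial j \<phi> x)" by (rule test_fun_mult[OF p test_fun_cpartial[OF t]])
  have ax: "axdiff p" "axdiff \<phi>" using p t unfolding test_fun_def by (auto intro: smooth_axdiff)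
  have "integral\<^sup>L lborel (cpartial j (\<lambda>x. p x * \<phi> x)) = 0"
    by (rule ibp_core) (use F in \<open>auto simp: test_fun_def\<close>)
  then have "integral\<^sup>L lborel (\<lambda>x. cpartial j p x * \<phi> x + p x * cpartial j \<phi> x) = 0"
    by (simp add: cpartial_mult[OF ax])
  moreover have "integrable lborel (\<lambda>x. cpartial j p x * \<phi> x)" "integrable lborel (\<lambda>x. p x * cpartial j \<phi> x)"
    using A B by (auto intro!: cont_cs_integrable test_fun_cont simp: test_fun_def)
  ultimately have "integral\<^sup>L lborel (\<lambda>x. cpartial j p x * \<phi> x) + integral\<^sup>L lborel (\<lambda>x. p x * cpartial j \<phi> x) = 0"
    by (simp add: Bochner_Integration.integral_add)
  then show ?thesis using int_on_omega[OF A] int_on_omega[OF B] by simp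
qed

lemma test_wp:
  assumes p: "test_fun \<Omega> p"
  shows "is_weak_partial \<Omega> j (\<lambda>x. complex_of_real (p x)) (\<lambda>x. complex_of_real (cpartial j p x))"
  unfolding is_weak_partial_def
proof (intro allI impI)
  fix \<phi> assume t: "test_fun \<Omega> \<phi>"
  have "integral\<^sup>L (lebesgue_on \<Omega>) (\<lambda>x. complex_of_real (p x) * complex_of_real (cpartial j \<phi> x))
      = complex_of_real (integral\<^sup>L (lebesgue_on \<Omega>) (\<lambda>x. p x * cpartial j \<phi> x))"
    by (simp flip: of_real_mult)
  also have "\<dots> = complex_of_real (- integral\<^sup>L (lebesgue_on \<Omega>) (\<lambda>x. cpartial j p x * \<phi> x))"
    by (simp add: ibp_omega[OF p t])
  also have "\<dots> = - integral\<^sup>L (lebesgue_on \<Omega>) (\<lambda>x. complex_of_real (cpartial j p x) * complex_of_real (\<phi> x))"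
    by (simp flip: of_real_mult)
  finally show "integral\<^sup>L (lebesgue_on \<Omega>) (\<lambda>x. complex_of_real (p x) * complex_of_real (cpartial j \<phi> x)) =
      - integral\<^sup>L (lebesgue_on \<Omega>) (\<lambda>x. complex_of_real (cpartial j p x) * complex_of_real (\<phi> x))" .
qed

lemma H1_test_comp:
  assumes r: "test_fun \<Omega> (\<lambda>x. Re (f x))" and i: "test_fun \<Omega> (\<lambda>x. Im (f x))"
  shows "H1 \<Omega> f"
proof -
  have feq: "f = (\<lambda>x. 1 * complex_of_real (Re (f x)) + \<i> * complex_of_real (Im (f x)))"
    by (simp add: complex_eq[symmetric])
  have "H1 \<Omega> (\<lambda>x. 1 * complex_of_real (Re (f x)) + \<i> * complex_of_real (Im (f x)))"
    unfolding H1_def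
  proof (intro conjI allI)
    show "L2 \<Omega> (\<lambda>x. 1 * complex_of_real (Re (f x)) + \<i> * complex_of_real (Im (f x)))"
      by (rule L2_lin[OF L2_test[OF r] L2_test[OF i]])
    fix j
    show "\<exists>g. L2 \<Omega> g \<and> is_weak_partial \<Omega> j (\<lambda>x. 1 * complex_of_real (Re (f x)) + \<i> * complex_of_real (Im (f x))) g"
      by (intro exI[of _ "\<lambda>x. 1 * complex_of_real (cpartial j (\<lambda>x. Re (f x)) x) + \<i> * complex_of_real (cpartial j (\<lambda>x. Im (f x)) x)"]
          conjI L2_lin[OF L2_test[OF test_fun_cpartial[OF r]] L2_test[OF test_fun_cpartial[OF i]]]
          wp_lin[OF L2_test[OF r] L2_test[OF i] L2_test[OF test_fun_cpartial[OF r]] L2_test[OF test_fun_cpartial[OF i]] test_wp[OF r] test_wp[OF i]])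
  qed
  then show ?thesis using feq by simp
qed

end


definition H1v :: "(real^'d) set \<Rightarrow> (real^'d \<Rightarrow> complex^'d) \<Rightarrow> bool" where
  "H1v \<Omega> u \<longleftrightarrow> (\<forall>i. H1 \<Omega> (\<lambda>x. u x $ i))"

lemma lc_comp: "(\<lambda>x. (a *s u x + b *s v x) $ i) = (\<lambda>x. a * u x $ i + b * v x $ i)"
  by simp

context bdom
begin

lemma L2_zero: "L2 \<Omega> (\<lambda>x. 0)"
  unfolding L2_def by (simp add: int_const[of 0, simplified])

lemma L2_sum: "finite S \<Longrightarrow> (\<And>i. i \<in> S \<Longrightarrow> L2 \<Omega> (f i)) \<Longrightarrow> L2 \<Omega> (\<lambda>x. \<Sum>i\<in>S. f i x)"
proof (induction S rule: finite_induct)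
  case empty then show ?case by (simp add: L2_zero)
next
  case (insert a S)
  then show ?case using L2_lin[of "f a" "\<lambda>x. \<Sum>i\<in>S. f i x" 1 1] by simp
qed

lemma H1v_lin: "H1v \<Omega> u \<Longrightarrow> H1v \<Omega> v \<Longrightarrow> H1v \<Omega> (\<lambda>x. a *s u x + b *s v x)"
  unfolding H1v_def lc_comp by (auto intro: H1_lin)

lemma L2_wpartial: "H1 \<Omega> f \<Longrightarrow> L2 \<Omega> (wpartial \<Omega> j f)"
  using wpartial_prop by blast

lemma L2_strain: "H1v \<Omega> u \<Longrightarrow> L2 \<Omega> (strain \<Omega> u i j)"
proof -
  assume u: "H1v \<Omega> u"
  have e: "strain \<Omega> u i j = (\<lambda>x. (1/2) * wpartial \<Omega> j (\<lambda>y. u y $ i) x + (1/2) * wpartial \<Omega> i (\<lambda>y. u y $ j) x)"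
    unfolding strain_def by (auto simp: field_simps)
  show ?thesis unfolding e by (rule L2_lin; rule L2_wpartial) (use u in \<open>auto simp: H1v_def\<close>)
qed

lemma L2_wdiv: "H1v \<Omega> u \<Longrightarrow> L2 \<Omega> (wdiv \<Omega> u)"
  unfolding wdiv_def[abs_def] H1v_def by (intro L2_sum) (auto intro: L2_wpartial)

lemma strain_lin:
  assumes "H1v \<Omega> u" "H1v \<Omega> v"
  shows "AE x in lebesgue_on \<Omega>. strain \<Omega> (\<lambda>x. a *s u x + b *s v x) i j x = a * strain \<Omega> u i j x + b * strain \<Omega> v i j x"
proof -
  have "AE x in lebesgue_on \<Omega>. wpartial \<Omega> j (\<lambda>x. a * u x $ i + b * v x $ i) x = a * wpartial \<Omega> j (\<lambda>x. u x $ i) x + b * wpartial \<Omega> j (\<lambda>x. v x $ i) x"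
    using assms unfolding H1v_def by (intro wpartial_lin) auto
  moreover have "AE x in lebesgue_on \<Omega>. wpartial \<Omega> i (\<lambda>x. a * u x $ j + b * v x $ j) x = a * wpartial \<Omega> i (\<lambda>x. u x $ j) x + b * wpartial \<Omega> i (\<lambda>x. v x $ j) x"
    using assms unfolding H1v_def by (intro wpartial_lin) auto
  ultimately show ?thesis
    by eventually_elim (simp add: strain_def lc_comp field_simps)
qed

lemma wdiv_lin:
  assumes "H1v \<Omega> u" "H1v \<Omega> v"
  shows "AE x in lebesgue_on \<Omega>. wdiv \<Omega> (\<lambda>x. a *s u x + b *s v x) x = a * wdiv \<Omega> u x + b * wdiv \<Omega> v x"
proof -
  have "\<forall>i\<in>UNIV. AE x in lebesgue_on \<Omega>. wpartial \<Omega> i (\<lambda>x. a * u x $ i + b * v x $ i) x = a * wpartial \<Omega> i (\<lambda>x. u x $ i) x + b * wpartial \<Omega> i (\<lambda>x. v x $ i) x"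
    using assms unfolding H1v_def by (auto intro: wpartial_lin)
  then have "AE x in lebesgue_on \<Omega>. \<forall>i\<in>UNIV. wpartial \<Omega> i (\<lambda>x. a * u x $ i + b * v x $ i) x = a * wpartial \<Omega> i (\<lambda>x. u x $ i) x + b * wpartial \<Omega> i (\<lambda>x. v x $ i) x"
    by (subst eventually_ball_finite_distrib) auto
  then show ?thesis
    by eventually_elim (simp add: wdiv_def lc_comp sum.distrib sum_distrib_left)
qed

lemma sL2ip_lin_AE:
  assumes "L2 \<Omega> F" "L2 \<Omega> G" "L2 \<Omega> K" "L2 \<Omega> h"
    and "AE x in lebesgue_on \<Omega>. K x = a * F x + b * G x"
  shows "sL2ip \<Omega> K h = a * sL2ip \<Omega> F h + b * sL2ip \<Omega> G h"
proof -
  have "sL2ip \<Omega> K h = sL2ip \<Omega> (\<lambda>x. a * F x + b * G x) h"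
    by (rule sL2ip_AE) (use assms in \<open>auto intro: L2_lin\<close>)
  also have "\<dots> = a * sL2ip \<Omega> F h + b * sL2ip \<Omega> G h" by (rule sL2ip_lin) (use assms in auto)
  finally show ?thesis .
qed

lemma ip1_lin:
  assumes u: "H1v \<Omega> u" and v: "H1v \<Omega> v" and w: "H1v \<Omega> w"
  shows "ip1 \<mu> lam \<Omega> (\<lambda>x. a *s u x + b *s v x) w = a * ip1 \<mu> lam \<Omega> u w + b * ip1 \<mu> lam \<Omega> v w"
proof -
  have uv: "H1v \<Omega> (\<lambda>x. a *s u x + b *s v x)" by (rule H1v_lin[OF u v])
  have s: "sL2ip \<Omega> (strain \<Omega> (\<lambda>x. a *s u x + b *s v x) i j) (strain \<Omega> w i j)
      = a * sL2ip \<Omega> (strain \<Omega> u i j) (strain \<Omega> w i j) + b * sL2ip \<Omega> (strain \<Omega> v i j) (strain \<Omega> w i j)" for i j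
    by (rule sL2ip_lin_AE[OF L2_strain[OF u] L2_strain[OF v] L2_strain[OF uv] L2_strain[OF w] strain_lin[OF u v]])
  have d: "sL2ip \<Omega> (wdiv \<Omega> (\<lambda>x. a *s u x + b *s v x)) (wdiv \<Omega> w)
      = a * sL2ip \<Omega> (wdiv \<Omega> u) (wdiv \<Omega> w) + b * sL2ip \<Omega> (wdiv \<Omega> v) (wdiv \<Omega> w)"
    by (rule sL2ip_lin_AE[OF L2_wdiv[OF u] L2_wdiv[OF v] L2_wdiv[OF uv] L2_wdiv[OF w] wdiv_lin[OF u v]])
  show ?thesis
    unfolding ip1_def s d by (simp add: sum.distrib sum_distrib_left algebra_simps)
qed

lemma L2ip_lin:
  assumes u: "H1v \<Omega> u" and v: "H1v \<Omega> v" and w: "H1v \<Omega> w"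
  shows "L2ip \<Omega> (\<lambda>x. a *s u x + b *s v x) w = a * L2ip \<Omega> u w + b * L2ip \<Omega> v w"
proof -
  have s: "sL2ip \<Omega> (\<lambda>x. (a *s u x + b *s v x) $ i) (\<lambda>x. w x $ i) = a * sL2ip \<Omega> (\<lambda>x. u x $ i) (\<lambda>x. w x $ i) + b * sL2ip \<Omega> (\<lambda>x. v x $ i) (\<lambda>x. w x $ i)" for i
    unfolding lc_comp by (rule sL2ip_lin) (use u v w in \<open>auto simp: H1v_def intro: H1_L2\<close>)
  show ?thesis unfolding L2ip_def s by (simp add: sum.distrib sum_distrib_left)
qed

lemma ip0_lin:
  assumes u: "H1v \<Omega> u" and v: "H1v \<Omega> v" and w: "H1v \<Omega> w"
  shows "ip0 \<rho> \<Omega> (\<lambda>x. a *s u x + b *s v x) w = a * ip0 \<rho> \<Omega> u w + b * ip0 \<rho> \<Omega> v w"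
  unfolding ip0_def L2ip_lin[OF assms] by (simp add: algebra_simps)

lemma ip1_cnj: "ip1 \<mu> lam \<Omega> v u = cnj (ip1 \<mu> lam \<Omega> u v)"
  unfolding ip1_def by (simp add: sL2ip_cnj[of _ "strain \<Omega> u _ _"] sL2ip_cnj[of _ "wdiv \<Omega> u"])

lemma ip0_cnj: "ip0 \<rho> \<Omega> v u = cnj (ip0 \<rho> \<Omega> u v)"
  unfolding ip0_def L2ip_def by (simp add: sL2ip_cnj[of _ "\<lambda>x. u x $ _"])

lemma sL2ip_self_real: "Im (sL2ip \<Omega> f f) = 0" "0 \<le> Re (sL2ip \<Omega> f f)"
  unfolding sL2ip_self by (auto intro: sL2ip_self_ge)

lemma ip1_self: "\<mu> \<ge> 0 \<Longrightarrow> lam \<ge> 0 \<Longrightarrow> Im (ip1 \<mu> lam \<Omega> u u) = 0 \<and> 0 \<le> Re (ip1 \<mu> lam \<Omega> u u)"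
  unfolding ip1_def
  by (auto simp: sL2ip_self_real Re_sum Im_sum intro!: sum_nonneg add_nonneg_nonneg mult_nonneg_nonneg sum.neutral)

lemma ip0_self: "\<rho> \<ge> 0 \<Longrightarrow> Im (ip0 \<rho> \<Omega> u u) = 0 \<and> 0 \<le> Re (ip0 \<rho> \<Omega> u u)"
  unfolding ip0_def L2ip_def
  by (auto simp: sL2ip_self_real Re_sum Im_sum intro!: sum_nonneg mult_nonneg_nonneg sum.neutral)

lemma H1_normsq_nonneg: "0 \<le> H1_normsq \<Omega> u"
  unfolding H1_normsq_def by (auto intro!: sum_nonneg add_nonneg_nonneg sL2ip_self_real)

lemma N_lin:
  assumes f: "L2 \<Omega> f" and g: "L2 \<Omega> g"
  shows "Re (sL2ip \<Omega> (\<lambda>x. a * f x + b * g x) (\<lambda>x. a * f x + b * g x))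
    \<le> 2 * (cmod a)\<^sup>2 * Re (sL2ip \<Omega> f f) + 2 * (cmod b)\<^sup>2 * Re (sL2ip \<Omega> g g)"
proof -
  have "integral\<^sup>L (lebesgue_on \<Omega>) (\<lambda>x. (cmod (a * f x + b * g x))\<^sup>2)
      \<le> integral\<^sup>L (lebesgue_on \<Omega>) (\<lambda>x. 2 * (cmod a)\<^sup>2 * (cmod (f x))\<^sup>2 + 2 * (cmod b)\<^sup>2 * (cmod (g x))\<^sup>2)"
    by (rule integral_mono) (use L2_sq_int[OF L2_lin[OF f g]] L2_sq_int[OF f] L2_sq_int[OF g] cmod_lin_sq in auto)
  also have "\<dots> = 2 * (cmod a)\<^sup>2 * integral\<^sup>L (lebesgue_on \<Omega>) (\<lambda>x. (cmod (f x))\<^sup>2) + 2 * (cmod b)\<^sup>2 * integral\<^sup>L (lebesgue_on \<Omega>) (\<lambda>x. (cmod (g x))\<^sup>2)"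
    using L2_sq_int[OF f] L2_sq_int[OF g] by (subst Bochner_Integration.integral_add) auto
  finally show ?thesis unfolding sL2ip_self by simp
qed

lemma N_AE:
  assumes "AE x in lebesgue_on \<Omega>. f x = f' x" "L2 \<Omega> f" "L2 \<Omega> f'"
  shows "sL2ip \<Omega> f f = sL2ip \<Omega> f' f'"
proof -
  have "sL2ip \<Omega> f f = sL2ip \<Omega> f' f" by (rule sL2ip_AE) (use assms in auto)
  also have "\<dots> = cnj (sL2ip \<Omega> f f')" by (rule sL2ip_cnj)
  also have "sL2ip \<Omega> f f' = sL2ip \<Omega> f' f'" by (rule sL2ip_AE) (use assms in auto)
  also have "cnj (sL2ip \<Omega> f' f') = sL2ip \<Omega> f' f'" using sL2ip_self_real(1)[of f'] by (simp add: complex_eq_iff)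
  finally show ?thesis .
qed

lemma H1_normsq_lin:
  assumes p: "H1v \<Omega> p" and q: "H1v \<Omega> q"
  shows "H1_normsq \<Omega> (\<lambda>x. a *s p x + b *s q x) \<le> 2 * (cmod a)\<^sup>2 * H1_normsq \<Omega> p + 2 * (cmod b)\<^sup>2 * H1_normsq \<Omega> q"
proof -
  have pi: "H1 \<Omega> (\<lambda>x. p x $ i)" "H1 \<Omega> (\<lambda>x. q x $ i)" for i using p q unfolding H1v_def by auto
  have c1: "Re (sL2ip \<Omega> (\<lambda>x. a * p x $ i + b * q x $ i) (\<lambda>x. a * p x $ i + b * q x $ i))
      \<le> 2 * (cmod a)\<^sup>2 * Re (sL2ip \<Omega> (\<lambda>x. p x $ i) (\<lambda>x. p x $ i)) + 2 * (cmod b)\<^sup>2 * Re (sL2ip \<Omega> (\<lambda>x. q x $ i) (\<lambda>x. q x $ i))" for i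
    by (rule N_lin[OF H1_L2[OF pi(1)] H1_L2[OF pi(2)]])
  have c2: "Re (sL2ip \<Omega> (wpartial \<Omega> j (\<lambda>x. a * p x $ i + b * q x $ i)) (wpartial \<Omega> j (\<lambda>x. a * p x $ i + b * q x $ i)))
      \<le> 2 * (cmod a)\<^sup>2 * Re (sL2ip \<Omega> (wpartial \<Omega> j (\<lambda>x. p x $ i)) (wpartial \<Omega> j (\<lambda>x. p x $ i)))
        + 2 * (cmod b)\<^sup>2 * Re (sL2ip \<Omega> (wpartial \<Omega> j (\<lambda>x. q x $ i)) (wpartial \<Omega> j (\<lambda>x. q x $ i)))" for i j
  proof -
    have "sL2ip \<Omega> (wpartial \<Omega> j (\<lambda>x. a * p x $ i + b * q x $ i)) (wpartial \<Omega> j (\<lambda>x. a * p x $ i + b * q x $ i))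
        = sL2ip \<Omega> (\<lambda>x. a * wpartial \<Omega> j (\<lambda>x. p x $ i) x + b * wpartial \<Omega> j (\<lambda>x. q x $ i) x) (\<lambda>x. a * wpartial \<Omega> j (\<lambda>x. p x $ i) x + b * wpartial \<Omega> j (\<lambda>x. q x $ i) x)"
      by (rule N_AE[OF wpartial_lin[OF pi]]) (auto intro!: L2_wpartial H1_lin pi L2_lin)
    then show ?thesis using N_lin[OF L2_wpartial[OF pi(1)] L2_wpartial[OF pi(2)], where a=a and b=b] by simp
  qed
  have "H1_normsq \<Omega> (\<lambda>x. a *s p x + b *s q x) \<le>
      (\<Sum>i\<in>UNIV. (2 * (cmod a)\<^sup>2 * Re (sL2ip \<Omega> (\<lambda>x. p x $ i) (\<lambda>x. p x $ i)) + 2 * (cmod b)\<^sup>2 * Re (sL2ip \<Omega> (\<lambda>x. q x $ i) (\<lambda>x. q x $ i))) +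
        (\<Sum>j\<in>UNIV. 2 * (cmod a)\<^sup>2 * Re (sL2ip \<Omega> (wpartial \<Omega> j (\<lambda>x. p x $ i)) (wpartial \<Omega> j (\<lambda>x. p x $ i)))
        + 2 * (cmod b)\<^sup>2 * Re (sL2ip \<Omega> (wpartial \<Omega> j (\<lambda>x. q x $ i)) (wpartial \<Omega> j (\<lambda>x. q x $ i)))))"
    unfolding H1_normsq_def lc_comp by (intro sum_mono add_mono c1 c2)
  also have "\<dots> = 2 * (cmod a)\<^sup>2 * H1_normsq \<Omega> p + 2 * (cmod b)\<^sup>2 * H1_normsq \<Omega> q"
    unfolding H1_normsq_def by (simp add: sum.distrib sum_distrib_left algebra_simps)
  finally show ?thesis .
qed

lemma test_field_lin:
  assumes "test_field \<Omega> \<phi>" "test_field \<Omega> \<psi>"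
  shows "test_field \<Omega> (\<lambda>x. a *s \<phi> x + b *s \<psi> x)"
  unfolding test_field_def
proof
  fix i
  have r: "test_fun \<Omega> (\<lambda>x. Re (\<phi> x $ i))" "test_fun \<Omega> (\<lambda>x. Im (\<phi> x $ i))"
      "test_fun \<Omega> (\<lambda>x. Re (\<psi> x $ i))" "test_fun \<Omega> (\<lambda>x. Im (\<psi> x $ i))"
    using assms unfolding test_field_def by auto
  have e1: "(\<lambda>x. Re ((a *s \<phi> x + b *s \<psi> x) $ i)) = (\<lambda>x. (Re a * Re (\<phi> x $ i) + (- Im a) * Im (\<phi> x $ i)) + (Re b * Re (\<psi> x $ i) + (- Im b) * Im (\<psi> x $ i)))"
    by auto
  have e2: "(\<lambda>x. Im ((a *s \<phi> x + b *s \<psi> x) $ i)) = (\<lambda>x. (Im a * Re (\<phi> x $ i) + Re a * Im (\<phi> x $ i)) + (Im b * Re (\<psi> x $ i) + Re b * Im (\<psi> x $ i)))"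
    by (auto simp: algebra_simps)
  show "test_fun \<Omega> (\<lambda>x. Re ((a *s \<phi> x + b *s \<psi> x) $ i)) \<and> test_fun \<Omega> (\<lambda>x. Im ((a *s \<phi> x + b *s \<psi> x) $ i))"
    unfolding e1 e2 using r by (intro conjI test_fun_add test_fun_scale)
qed

lemma test_field_H1v: "test_field \<Omega> \<phi> \<Longrightarrow> H1v \<Omega> \<phi>"
  unfolding test_field_def H1v_def by (auto intro: H1_test_comp)

lemma H10_H1v: "u \<in> H10 \<Omega> \<Longrightarrow> H1v \<Omega> u"
  unfolding H10_def H1v_def by blast

lemma H10_lin:
  assumes u: "u \<in> H10 \<Omega>" and v: "v \<in> H10 \<Omega>"
  shows "(\<lambda>x. a *s u x + b *s v x) \<in> H10 \<Omega>"
proof -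
  obtain \<phi> where \<phi>: "\<And>k. test_field \<Omega> (\<phi> k)" "(\<lambda>k. H1_normsq \<Omega> (\<lambda>x. u x - \<phi> k x)) \<longlonglongrightarrow> 0"
    using u unfolding H10_def by blast
  obtain \<psi> where \<psi>: "\<And>k. test_field \<Omega> (\<psi> k)" "(\<lambda>k. H1_normsq \<Omega> (\<lambda>x. v x - \<psi> k x)) \<longlonglongrightarrow> 0"
    using v unfolding H10_def by blast
  have uH: "H1v \<Omega> u" and vH: "H1v \<Omega> v" using u v by (auto intro: H10_H1v)
  have dH: "H1v \<Omega> (\<lambda>x. u x - \<phi> k x)" "H1v \<Omega> (\<lambda>x. v x - \<psi> k x)" for k
    using H1v_lin[OF uH test_field_H1v[OF \<phi>(1)], of 1 "-1" k] H1v_lin[OF vH test_field_H1v[OF \<psi>(1)], of 1 "-1" k]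
    by (simp_all add: algebra_simps)
  have eq: "(\<lambda>x. (a *s u x + b *s v x) - (a *s \<phi> k x + b *s \<psi> k x)) = (\<lambda>x. a *s (u x - \<phi> k x) + b *s (v x - \<psi> k x))" for k
    by (auto simp: vec_eq_iff algebra_simps)
  have bound: "H1_normsq \<Omega> (\<lambda>x. (a *s u x + b *s v x) - (a *s \<phi> k x + b *s \<psi> k x))
      \<le> 2 * (cmod a)\<^sup>2 * H1_normsq \<Omega> (\<lambda>x. u x - \<phi> k x) + 2 * (cmod b)\<^sup>2 * H1_normsq \<Omega> (\<lambda>x. v x - \<psi> k x)" for k
    unfolding eq by (rule H1_normsq_lin[OF dH])
  have lim: "(\<lambda>k. 2 * (cmod a)\<^sup>2 * H1_normsq \<Omega> (\<lambda>x. u x - \<phi> k x) + 2 * (cmod b)\<^sup>2 * H1_normsq \<Omega> (\<lambda>x. v x - \<psi> k x)) \<longlonglongrightarrow> 0"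
    using tendsto_add[OF tendsto_mult_right_zero[OF \<phi>(2)] tendsto_mult_right_zero[OF \<psi>(2)]] by simp
  have "(\<lambda>k. H1_normsq \<Omega> (\<lambda>x. (a *s u x + b *s v x) - (a *s \<phi> k x + b *s \<psi> k x))) \<longlonglongrightarrow> 0"
    by (rule tendsto_sandwich[OF _ _ tendsto_const lim]) (auto intro!: always_eventually H1_normsq_nonneg bound)
  moreover have "\<forall>k. test_field \<Omega> (\<lambda>x. a *s \<phi> k x + b *s \<psi> k x)"
    using \<phi>(1) \<psi>(1) by (auto intro: test_field_lin)
  moreover have "\<forall>i. H1 \<Omega> (\<lambda>x. (a *s u x + b *s v x) $ i)"
    using H1v_lin[OF uH vH] unfolding H1v_def by blast
  ultimately show ?thesis unfolding H10_def mem_Collect_eq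
    by (intro conjI exI[of _ "\<lambda>k x. a *s \<phi> k x + b *s \<psi> k x"]) auto
qed

end


definition slin :: "('x \<Rightarrow> complex^'n) set \<Rightarrow> (('x \<Rightarrow> complex^'n) \<Rightarrow> ('x \<Rightarrow> complex^'n) \<Rightarrow> complex) \<Rightarrow> bool" where
  "slin V B \<longleftrightarrow> (\<forall>u\<in>V. \<forall>v\<in>V. \<forall>a b. (\<lambda>x. a *s u x + b *s v x) \<in> V) \<and>
     (\<forall>u\<in>V. \<forall>v\<in>V. \<forall>w\<in>V. \<forall>a b. B (\<lambda>x. a *s u x + b *s v x) w = a * B u w + b * B v w) \<and>
     (\<forall>u\<in>V. \<forall>v\<in>V. B v u = cnj (B u v))"

definition spsd :: "('x \<Rightarrow> complex^'n) set \<Rightarrow> (('x \<Rightarrow> complex^'n) \<Rightarrow> ('x \<Rightarrow> complex^'n) \<Rightarrow> complex) \<Rightarrow> bool" where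
  "spsd V B \<longleftrightarrow> (\<forall>u\<in>V. 0 \<le> Re (B u u))"

lemma linI:
  assumes "\<And>u v a b. u \<in> V \<Longrightarrow> v \<in> V \<Longrightarrow> (\<lambda>x. a *s u x + b *s v x) \<in> V"
    and "\<And>u v w a b. u \<in> V \<Longrightarrow> v \<in> V \<Longrightarrow> w \<in> V \<Longrightarrow> B (\<lambda>x. a *s u x + b *s v x) w = a * B u w + b * B v w"
    and "\<And>u v. u \<in> V \<Longrightarrow> v \<in> V \<Longrightarrow> B v u = cnj (B u v)"
  shows "slin V B"
  using assms unfolding slin_def by blast

context
  fixes V :: "('x \<Rightarrow> complex^'n) set" and B
  assumes L: "slin V B"
begin

lemma lc_in: "u \<in> V \<Longrightarrow> v \<in> V \<Longrightarrow> (\<lambda>x. a *s u x + b *s v x) \<in> V"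
  using L unfolding slin_def by blast

lemma B_left: "u \<in> V \<Longrightarrow> v \<in> V \<Longrightarrow> w \<in> V \<Longrightarrow> B (\<lambda>x. a *s u x + b *s v x) w = a * B u w + b * B v w"
  using L unfolding slin_def by blast

lemma B_herm: "u \<in> V \<Longrightarrow> v \<in> V \<Longrightarrow> B v u = cnj (B u v)"
  using L unfolding slin_def by blast

lemma B_self_real: "u \<in> V \<Longrightarrow> Im (B u u) = 0"
proof -
  assume u: "u \<in> V"
  have "B u u = cnj (B u u)" by (rule B_herm[OF u u])
  then show ?thesis by (simp add: complex_eq_iff)
qed

lemma B_self_eq: "u \<in> V \<Longrightarrow> B u u = complex_of_real (Re (B u u))"
  using B_self_real by (simp add: complex_eq_iff)

lemma eq_lc1: "(\<lambda>x. (u::'x \<Rightarrow> complex^'n) x - v x) = (\<lambda>x. 1 *s u x + (-1) *s v x)"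
  by (auto simp: fun_eq_iff vec_eq_iff)
lemma eq_lc2: "(\<lambda>x. (u::'x \<Rightarrow> complex^'n) x + v x) = (\<lambda>x. 1 *s u x + 1 *s v x)"
  by (auto simp: fun_eq_iff vec_eq_iff)
lemma eq_lc3: "(\<lambda>x. a *s (u::'x \<Rightarrow> complex^'n) x) = (\<lambda>x. a *s u x + 0 *s u x)"
  by (auto simp: fun_eq_iff vec_eq_iff)
lemma eq_lc4: "(\<lambda>x. 0::complex^'n) = (\<lambda>x. 0 *s (u::'x \<Rightarrow> complex^'n) x + 0 *s u x)"
  by (auto simp: fun_eq_iff vec_eq_iff)

lemma diff_in: "u \<in> V \<Longrightarrow> v \<in> V \<Longrightarrow> (\<lambda>x. u x - v x) \<in> V"
  by (subst eq_lc1) (rule lc_in)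

lemma add_in: "u \<in> V \<Longrightarrow> v \<in> V \<Longrightarrow> (\<lambda>x. u x + v x) \<in> V"
  by (subst eq_lc2) (rule lc_in)

lemma scale_in: "u \<in> V \<Longrightarrow> (\<lambda>x. a *s u x) \<in> V"
  by (subst eq_lc3) (rule lc_in)

lemma zero_in: "u \<in> V \<Longrightarrow> (\<lambda>x. 0) \<in> V"
  by (subst eq_lc4[of u]) (rule lc_in)

lemma B_right:
  assumes u: "u \<in> V" and v: "v \<in> V" and w: "w \<in> V"
  shows "B w (\<lambda>x. a *s u x + b *s v x) = cnj a * B w u + cnj b * B w v"
proof -
  have "B w (\<lambda>x. a *s u x + b *s v x) = cnj (B (\<lambda>x. a *s u x + b *s v x) w)"
    by (rule B_herm[OF lc_in[OF u v] w])
  also have "\<dots> = cnj (a * B u w + b * B v w)" by (simp only: B_left[OF u v w])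
  also have "\<dots> = cnj a * cnj (B u w) + cnj b * cnj (B v w)" by simp
  also have "\<dots> = cnj a * B w u + cnj b * B w v" by (simp only: B_herm[OF u w] B_herm[OF v w])
  finally show ?thesis .
qed

lemma B_diff_left: "u \<in> V \<Longrightarrow> v \<in> V \<Longrightarrow> w \<in> V \<Longrightarrow> B (\<lambda>x. u x - v x) w = B u w - B v w"
  by (subst eq_lc1) (simp only: B_left, simp)

lemma B_add_left: "u \<in> V \<Longrightarrow> v \<in> V \<Longrightarrow> w \<in> V \<Longrightarrow> B (\<lambda>x. u x + v x) w = B u w + B v w"
  by (subst eq_lc2) (simp only: B_left, simp)

lemma B_scale_left: "u \<in> V \<Longrightarrow> w \<in> V \<Longrightarrow> B (\<lambda>x. a *s u x) w = a * B u w"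
  by (subst eq_lc3) (simp only: B_left, simp)

lemma B_diff_right: "u \<in> V \<Longrightarrow> v \<in> V \<Longrightarrow> w \<in> V \<Longrightarrow> B w (\<lambda>x. u x - v x) = B w u - B w v"
  by (subst eq_lc1) (simp only: B_right, simp)

lemma B_add_right: "u \<in> V \<Longrightarrow> v \<in> V \<Longrightarrow> w \<in> V \<Longrightarrow> B w (\<lambda>x. u x + v x) = B w u + B w v"
  by (subst eq_lc2) (simp only: B_right, simp)

lemma B_scale_right: "u \<in> V \<Longrightarrow> w \<in> V \<Longrightarrow> B w (\<lambda>x. a *s u x) = cnj a * B w u"
  by (subst eq_lc3) (simp only: B_right, simp)

lemma B_zero_left: "w \<in> V \<Longrightarrow> B (\<lambda>x. 0) w = 0"
  by (subst eq_lc4[of w]) (simp only: B_left, simp)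

lemma sum_in_B_left:
  assumes "finite S" "\<And>n. n \<in> S \<Longrightarrow> \<psi> n \<in> V" "w \<in> V"
  shows "(\<lambda>x. \<Sum>n\<in>S. c n *s \<psi> n x) \<in> V \<and> B (\<lambda>x. \<Sum>n\<in>S. c n *s \<psi> n x) w = (\<Sum>n\<in>S. c n * B (\<psi> n) w)"
  using assms
proof (induction S rule: finite_induct)
  case empty then show ?case using zero_in B_zero_left by simp
next
  case (insert m S)
  then have IH: "(\<lambda>x. \<Sum>n\<in>S. c n *s \<psi> n x) \<in> V" "B (\<lambda>x. \<Sum>n\<in>S. c n *s \<psi> n x) w = (\<Sum>n\<in>S. c n * B (\<psi> n) w)"
    by auto
  have m: "\<psi> m \<in> V" using insert by auto
  have e: "(\<lambda>x. \<Sum>n\<in>insert m S. c n *s \<psi> n x) = (\<lambda>x. c m *s \<psi> m x + 1 *s (\<Sum>n\<in>S. c n *s \<psi> n x))"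
    using insert by auto
  have "B (\<lambda>x. c m *s \<psi> m x + 1 *s (\<Sum>n\<in>S. c n *s \<psi> n x)) w = c m * B (\<psi> m) w + 1 * B (\<lambda>x. \<Sum>n\<in>S. c n *s \<psi> n x) w"
    by (rule B_left[OF m IH(1) insert(5)])
  moreover have "(\<lambda>x. c m *s \<psi> m x + 1 *s (\<Sum>n\<in>S. c n *s \<psi> n x)) \<in> V" by (rule lc_in[OF m IH(1)])
  ultimately show ?case unfolding e using IH(2) insert(1,2) by simp
qed

lemma sum_in: "finite S \<Longrightarrow> (\<And>n. n \<in> S \<Longrightarrow> \<psi> n \<in> V) \<Longrightarrow> w \<in> V \<Longrightarrow> (\<lambda>x. \<Sum>n\<in>S. c n *s \<psi> n x) \<in> V"
  using sum_in_B_left by blast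

lemma B_sum_left: "finite S \<Longrightarrow> (\<And>n. n \<in> S \<Longrightarrow> \<psi> n \<in> V) \<Longrightarrow> w \<in> V \<Longrightarrow> B (\<lambda>x. \<Sum>n\<in>S. c n *s \<psi> n x) w = (\<Sum>n\<in>S. c n * B (\<psi> n) w)"
  using sum_in_B_left by blast

lemma B_sum_right:
  assumes "finite S" "\<And>n. n \<in> S \<Longrightarrow> \<psi> n \<in> V" "w \<in> V"
  shows "B w (\<lambda>x. \<Sum>n\<in>S. c n *s \<psi> n x) = (\<Sum>n\<in>S. cnj (c n) * B w (\<psi> n))"
proof -
  have "B w (\<lambda>x. \<Sum>n\<in>S. c n *s \<psi> n x) = cnj (B (\<lambda>x. \<Sum>n\<in>S. c n *s \<psi> n x) w)"
    by (rule B_herm[OF sum_in[OF assms] assms(3)])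
  also have "\<dots> = (\<Sum>n\<in>S. cnj (c n) * cnj (B (\<psi> n) w))" by (simp only: B_sum_left[OF assms]) simp
  also have "\<dots> = (\<Sum>n\<in>S. cnj (c n) * B w (\<psi> n))"
  proof (rule sum.cong[OF refl])
    fix n assume "n \<in> S"
    then show "cnj (c n) * cnj (B (\<psi> n) w) = cnj (c n) * B w (\<psi> n)" by (simp only: B_herm[OF assms(2) assms(3)])
  qed
  finally show ?thesis .
qed

lemma quad_expand:
  assumes u: "u \<in> V" and v: "v \<in> V"
  shows "B (\<lambda>x. u x - l *s v x) (\<lambda>x. u x - l *s v x) = B u u - cnj l * B u v - l * cnj (B u v) + l * cnj l * B v v"
proof -
  have lv: "(\<lambda>x. l *s v x) \<in> V" using scale_in v by blast
  have d: "(\<lambda>x. u x - l *s v x) \<in> V" using diff_in[OF u lv] .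
  have "B (\<lambda>x. u x - l *s v x) (\<lambda>x. u x - l *s v x) = B u (\<lambda>x. u x - l *s v x) - B (\<lambda>x. l *s v x) (\<lambda>x. u x - l *s v x)"
    by (rule B_diff_left[OF u lv d])
  also have "B u (\<lambda>x. u x - l *s v x) = B u u - cnj l * B u v"
    by (simp only: B_diff_right[OF u lv u] B_scale_right[OF v u])
  also have "B (\<lambda>x. l *s v x) (\<lambda>x. u x - l *s v x) = l * (B v u - cnj l * B v v)"
    by (simp only: B_scale_left[OF v d] B_diff_right[OF u lv v] B_scale_right[OF v v])
  also have "B v u = cnj (B u v)" by (rule B_herm[OF u v])
  finally show ?thesis by (simp add: algebra_simps)
qed

lemma cauchy_schwarz:
  assumes P: "spsd V B" and u: "u \<in> V" and v: "v \<in> V"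
  shows "(cmod (B u v))\<^sup>2 \<le> Re (B u u) * Re (B v v)"
proof -
  define p where "p = (cmod (B u v))\<^sup>2"
  define a where "a = Re (B u u)"
  define c where "c = Re (B v v)"
  have q: "0 \<le> a - 2 * t * p + t\<^sup>2 * p * c" for t :: real
  proof -
    define l where "l = complex_of_real t * B u v"
    have "(\<lambda>x. u x - l *s v x) \<in> V" using diff_in[OF u scale_in[OF v]] by blast
    then have "0 \<le> Re (B (\<lambda>x. u x - l *s v x) (\<lambda>x. u x - l *s v x))" using P unfolding spsd_def by blast
    also have "\<dots> = Re (B u u - cnj l * B u v - l * cnj (B u v) + l * cnj l * B v v)" by (simp only: quad_expand[OF u v])
    also have "\<dots> = a - 2 * t * p + t\<^sup>2 * p * c"
    proof -
      have bb: "B u v * cnj (B u v) = complex_of_real p" unfolding p_def by (rule complex_norm_square[symmetric])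
      have "cnj l * B u v = complex_of_real (t * p)" unfolding l_def using bb by (simp add: mult.commute mult.left_commute)
      moreover have "l * cnj (B u v) = complex_of_real (t * p)" unfolding l_def using bb by (simp add: mult.assoc)
      moreover have "l * cnj l = complex_of_real (t\<^sup>2 * p)" unfolding l_def using bb
        by (simp add: power2_eq_square mult.commute mult.left_commute)
      moreover have "B v v = complex_of_real c" unfolding c_def using B_self_eq[OF v] .
      ultimately show ?thesis unfolding a_def by simp
    qed
    finally show ?thesis .
  qed
  have a0: "0 \<le> a" and c0: "0 \<le> c" using P u v unfolding spsd_def a_def c_def by auto
  have p0: "0 \<le> p" unfolding p_def by simp
  show ?thesis
  proof (cases "p = 0")
    case True then show ?thesis using a0 c0 unfolding p_def a_def c_def by simp
  next
    case False
    then have pp: "p > 0" using p0 by simp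
    show ?thesis
    proof (cases "c = 0")
      case True
      have "0 \<le> a - 2 * ((a + 1) / (2 * p)) * p" using q[of "(a + 1) / (2 * p)"] True by simp
      then show ?thesis using pp by (simp add: field_simps)
    next
      case False
      then have cp: "c > 0" using c0 by simp
      have "0 \<le> a - 2 * (1 / c) * p + (1 / c)\<^sup>2 * p * c" using q[of "1 / c"] .
      then have "0 \<le> a - p / c" using cp by (simp add: power2_eq_square field_simps)
      then have "p \<le> a * c" using cp by (simp add: field_simps)
      then show ?thesis unfolding p_def a_def c_def .
    qed
  qed
qed

end

lemma lin_comb:
  assumes "slin V B1" "slin V B2"
  shows "slin V (\<lambda>u v. B1 u v + complex_of_real r * B2 u v)"
proof (rule linI)
  fix u v a b assume "u \<in> V" "v \<in> V"
  then show "(\<lambda>x. a *s u x + b *s v x) \<in> V" using lc_in[OF assms(1)] by blast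
next
  fix u v w a b assume uvw: "u \<in> V" "v \<in> V" "w \<in> V"
  show "B1 (\<lambda>x. a *s u x + b *s v x) w + complex_of_real r * B2 (\<lambda>x. a *s u x + b *s v x) w =
       a * (B1 u w + complex_of_real r * B2 u w) + b * (B1 v w + complex_of_real r * B2 v w)"
    by (simp only: B_left[OF assms(1) uvw] B_left[OF assms(2) uvw]) (simp add: algebra_simps)
next
  fix u v assume uv: "u \<in> V" "v \<in> V"
  show "B1 v u + complex_of_real r * B2 v u = cnj (B1 u v + complex_of_real r * B2 u v)"
    by (simp only: B_herm[OF assms(1) uv] B_herm[OF assms(2) uv]) simp
qed


locale spec_setting =
  fixes V :: "('x \<Rightarrow> complex^'n) set"
    and B1 B0 :: "('x \<Rightarrow> complex^'n) \<Rightarrow> ('x \<Rightarrow> complex^'n) \<Rightarrow> complex"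
    and \<psi> :: "nat \<Rightarrow> 'x \<Rightarrow> complex^'n" and \<kappa> :: "nat \<Rightarrow> real" and \<omega>2 :: real
  assumes L1: "slin V B1" and L0: "slin V B0" and P1: "spsd V B1" and P0: "spsd V B0"
    and psiV: "\<psi> n \<in> V" and kpos: "\<kappa> n > 0" and kmono: "mono \<kappa>"
    and klim: "filterlim \<kappa> at_top sequentially"
    and eig: "v \<in> V \<Longrightarrow> B1 (\<psi> n) v = complex_of_real (\<kappa> n) * B0 (\<psi> n) v"
    and orth: "n \<noteq> m \<Longrightarrow> B1 (\<psi> n) (\<psi> m) = 0 \<and> B0 (\<psi> n) (\<psi> m) = 0"
    and nrm: "sqrt (Re (B1 (\<psi> n) (\<psi> n) + B0 (\<psi> n) (\<psi> n))) = 1"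
    and compl: "v \<in> V \<Longrightarrow> e > 0 \<Longrightarrow> \<exists>N c. sqrt (Re (B1 (\<lambda>x. v x - (\<Sum>n<N. c n *s \<psi> n x)) (\<lambda>x. v x - (\<Sum>n<N. c n *s \<psi> n x))
        + B0 (\<lambda>x. v x - (\<Sum>n<N. c n *s \<psi> n x)) (\<lambda>x. v x - (\<Sum>n<N. c n *s \<psi> n x)))) < e"
    and notin: "\<omega>2 \<notin> range \<kappa>"
begin

definition BV where "BV u v = B1 u v + B0 u v"
definition A where "A u v = B1 u v - complex_of_real \<omega>2 * B0 u v"
definition Lm where "Lm = {n. \<omega>2 > \<kappa> n}"

lemma LV: "slin V BV"
proof -
  have "BV = (\<lambda>u v. B1 u v + complex_of_real 1 * B0 u v)" by (auto simp: fun_eq_iff BV_def)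
  then show ?thesis using lin_comb[OF L1 L0, of 1] by simp
qed

lemma LA: "slin V A"
proof -
  have "A = (\<lambda>u v. B1 u v + complex_of_real (- \<omega>2) * B0 u v)" by (auto simp: fun_eq_iff A_def)
  then show ?thesis using lin_comb[OF L1 L0, of "- \<omega>2"] by simp
qed

lemma PV: "spsd V BV"
  using P1 P0 unfolding spsd_def BV_def by auto

lemma re1: "u \<in> V \<Longrightarrow> 0 \<le> Re (B1 u u)" using P1 unfolding spsd_def by auto
lemma re0: "u \<in> V \<Longrightarrow> 0 \<le> Re (B0 u u)" using P0 unfolding spsd_def by auto
lemma reV: "u \<in> V \<Longrightarrow> 0 \<le> Re (BV u u)" using PV unfolding spsd_def by auto

lemma B1_le: "u \<in> V \<Longrightarrow> Re (B1 u u) \<le> Re (BV u u)" using re0 by (simp add: BV_def)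
lemma B0_le: "u \<in> V \<Longrightarrow> Re (B0 u u) \<le> Re (BV u u)" using re1 by (simp add: BV_def)

lemma BV_psi: "v \<in> V \<Longrightarrow> BV (\<psi> n) v = complex_of_real (\<kappa> n + 1) * B0 (\<psi> n) v"
  by (simp add: BV_def eig algebra_simps)

lemma BV_pp: "BV (\<psi> n) (\<psi> n) = 1"
proof -
  have "Re (BV (\<psi> n) (\<psi> n)) = 1" using nrm[of n] reV[OF psiV] unfolding BV_def
    by (metis real_sqrt_eq_1_iff)
  then show ?thesis using B_self_eq[OF LV psiV] by (metis of_real_1)
qed

lemma B0_pp: "B0 (\<psi> n) (\<psi> n) = complex_of_real (1 / (\<kappa> n + 1))"
proof -
  have "BV (\<psi> n) (\<psi> n) = complex_of_real (\<kappa> n + 1) * B0 (\<psi> n) (\<psi> n)" by (rule BV_psi[OF psiV])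
  then have h: "complex_of_real (\<kappa> n + 1) * B0 (\<psi> n) (\<psi> n) = 1" using BV_pp[of n] by simp
  have nz: "complex_of_real (\<kappa> n + 1) \<noteq> 0" using kpos[of n] by (metis of_real_eq_0_iff add_pos_pos zero_less_one less_irrefl)
  from h nz have "B0 (\<psi> n) (\<psi> n) = 1 / complex_of_real (\<kappa> n + 1)" by (simp add: field_simps)
  also have "\<dots> = complex_of_real (1 / (\<kappa> n + 1))" by simp
  finally show ?thesis .
qed

lemma B1_pp: "B1 (\<psi> n) (\<psi> n) = complex_of_real (\<kappa> n / (\<kappa> n + 1))"
  using eig[OF psiV, of n n] B0_pp by simp

definition diag where "diag B \<longleftrightarrow> (\<forall>n m. n \<noteq> m \<longrightarrow> B (\<psi> n) (\<psi> m) = 0)"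

lemma diag1: "diag B1" and diag0: "diag B0" using orth unfolding diag_def by auto
lemma diagV: "diag BV" using orth unfolding diag_def BV_def by auto
lemma diagA: "diag A" using orth unfolding diag_def A_def by auto

lemma sum_psi_in: "finite S \<Longrightarrow> (\<lambda>x. \<Sum>n\<in>S. c n *s \<psi> n x) \<in> V"
  by (rule sum_in[OF L1 _ _ psiV]) (auto intro: psiV)

lemma diag_sum_left:
  assumes B: "slin V B" "diag B" and S: "finite S"
  shows "B (\<lambda>x. \<Sum>n\<in>S. c n *s \<psi> n x) (\<psi> m) = (if m \<in> S then c m * B (\<psi> m) (\<psi> m) else 0)"
proof -
  have "B (\<lambda>x. \<Sum>n\<in>S. c n *s \<psi> n x) (\<psi> m) = (\<Sum>n\<in>S. c n * B (\<psi> n) (\<psi> m))"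
    by (rule B_sum_left[OF B(1) S psiV psiV])
  also have "\<dots> = (\<Sum>n\<in>S. if n = m then c m * B (\<psi> m) (\<psi> m) else 0)"
    using B(2) unfolding diag_def by (intro sum.cong) auto
  also have "\<dots> = (if m \<in> S then c m * B (\<psi> m) (\<psi> m) else 0)" using S by simp
  finally show ?thesis .
qed

lemma diag_sum_sum:
  assumes B: "slin V B" "diag B" and S: "finite S"
  shows "B (\<lambda>x. \<Sum>n\<in>S. c n *s \<psi> n x) (\<lambda>x. \<Sum>n\<in>S. d n *s \<psi> n x) = (\<Sum>n\<in>S. c n * cnj (d n) * B (\<psi> n) (\<psi> n))"
proof -
  have "B (\<lambda>x. \<Sum>n\<in>S. c n *s \<psi> n x) (\<lambda>x. \<Sum>n\<in>S. d n *s \<psi> n x) = (\<Sum>n\<in>S. cnj (d n) * B (\<lambda>x. \<Sum>n\<in>S. c n *s \<psi> n x) (\<psi> n))"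
    by (rule B_sum_right[OF B(1) S psiV sum_psi_in[OF S]])
  also have "\<dots> = (\<Sum>n\<in>S. c n * cnj (d n) * B (\<psi> n) (\<psi> n))"
    using diag_sum_left[OF B S] by (intro sum.cong) auto
  finally show ?thesis .
qed

lemma BV_sum_psi: "finite S \<Longrightarrow> BV (\<lambda>x. \<Sum>n\<in>S. c n *s \<psi> n x) (\<psi> m) = (if m \<in> S then c m else 0)"
  using diag_sum_left[OF LV diagV] BV_pp by simp

lemma Lm_bound: "\<exists>N. \<forall>n\<ge>N. \<omega>2 < \<kappa> n"
proof -
  have "eventually (\<lambda>n. \<omega>2 + 1 \<le> \<kappa> n) sequentially"
    using klim unfolding filterlim_at_top by blast
  then obtain N where "\<forall>n\<ge>N. \<omega>2 + 1 \<le> \<kappa> n" unfolding eventually_sequentially by blast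
  then show ?thesis by (intro exI[of _ N]) auto
qed

lemma Lm_finite: "finite Lm"
proof -
  obtain N where N: "\<forall>n\<ge>N. \<omega>2 < \<kappa> n" using Lm_bound by blast
  have "Lm \<subseteq> {..<N}" using N unfolding Lm_def by (auto simp: not_less[symmetric])
  then show ?thesis using finite_subset by blast
qed

lemma ks_ex: "\<exists>ks. 0 < ks \<and> \<omega>2 < ks \<and> (\<forall>n. n \<notin> Lm \<longrightarrow> ks \<le> \<kappa> n)"
proof -
  obtain N where N: "\<forall>n\<ge>N. \<omega>2 < \<kappa> n" using Lm_bound by blast
  then have "N \<notin> Lm" unfolding Lm_def by auto
  define n0 where "n0 = (LEAST n. n \<notin> Lm)"
  have n0: "n0 \<notin> Lm" unfolding n0_def by (rule LeastI[of "\<lambda>n. n \<notin> Lm", OF \<open>N \<notin> Lm\<close>])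
  have le: "\<kappa> n0 \<le> \<kappa> n" if "n \<notin> Lm" for n
  proof -
    have "n0 \<le> n" unfolding n0_def by (rule Least_le) (rule that)
    then show ?thesis using kmono by (simp add: mono_def)
  qed
  have "\<omega>2 \<le> \<kappa> n0" using n0 unfolding Lm_def by auto
  moreover have "\<omega>2 \<noteq> \<kappa> n0" using notin by auto
  ultimately show ?thesis using le kpos[of n0] by (intro exI[of _ "\<kappa> n0"]) auto
qed

definition co where "co v n = BV v (\<psi> n)"
definition P where "P v = (\<lambda>x. \<Sum>n\<in>Lm. co v n *s \<psi> n x)"
definition W where "W = {(\<lambda>x. \<Sum>n\<in>Lm. c n *s \<psi> n x) | c. True}"
definition Tl where "Tl v = (\<lambda>x. v x - 2 *s (THE w. w \<in> W \<and> (\<forall>z\<in>W. BV (\<lambda>x. v x - w x) z = 0)) x)"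

lemma P_in: "P v \<in> V" unfolding P_def by (rule sum_psi_in[OF Lm_finite])

lemma BV_P_psi: "BV (P v) (\<psi> m) = (if m \<in> Lm then co v m else 0)"
  unfolding P_def by (rule BV_sum_psi[OF Lm_finite])

lemma orth_P: "v \<in> V \<Longrightarrow> m \<in> Lm \<Longrightarrow> BV (\<lambda>x. v x - P v x) (\<psi> m) = 0"
  by (simp add: B_diff_left[OF LV _ P_in psiV] BV_P_psi co_def)

lemma psi_W: "m \<in> Lm \<Longrightarrow> \<psi> m \<in> W"
proof -
  assume m: "m \<in> Lm"
  have "\<psi> m = (\<lambda>x. \<Sum>n\<in>Lm. (if n = m then 1 else 0) *s \<psi> n x)"
  proof
    fix x
    have "(\<Sum>n\<in>Lm. (if n = m then 1 else 0) *s \<psi> n x) = (\<Sum>n\<in>Lm. if n = m then \<psi> n x else 0)"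
      by (intro sum.cong) auto
    also have "\<dots> = \<psi> m x" using m Lm_finite by simp
    finally show "\<psi> m x = (\<Sum>n\<in>Lm. (if n = m then 1 else 0) *s \<psi> n x)" by simp
  qed
  then show ?thesis unfolding W_def by (intro CollectI exI[of _ "\<lambda>n. if n = m then 1 else 0"]) simp
qed

lemma the_P:
  assumes v: "v \<in> V"
  shows "(THE w. w \<in> W \<and> (\<forall>z\<in>W. BV (\<lambda>x. v x - w x) z = 0)) = P v"
proof (rule the_equality)
  have dV: "(\<lambda>x. v x - P v x) \<in> V" by (rule diff_in[OF LV v P_in])
  show "P v \<in> W \<and> (\<forall>z\<in>W. BV (\<lambda>x. v x - P v x) z = 0)"
  proof
    show "P v \<in> W" unfolding W_def P_def by blast
    show "\<forall>z\<in>W. BV (\<lambda>x. v x - P v x) z = 0"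
    proof
      fix z assume "z \<in> W"
      then obtain d where z: "z = (\<lambda>x. \<Sum>n\<in>Lm. d n *s \<psi> n x)" unfolding W_def by blast
      have "BV (\<lambda>x. v x - P v x) z = (\<Sum>n\<in>Lm. cnj (d n) * BV (\<lambda>x. v x - P v x) (\<psi> n))"
        unfolding z by (rule B_sum_right[OF LV Lm_finite psiV dV])
      also have "\<dots> = 0" using orth_P[OF v] by simp
      finally show "BV (\<lambda>x. v x - P v x) z = 0" .
    qed
  qed
next
  fix w assume w: "w \<in> W \<and> (\<forall>z\<in>W. BV (\<lambda>x. v x - w x) z = 0)"
  then obtain d where wd: "w = (\<lambda>x. \<Sum>n\<in>Lm. d n *s \<psi> n x)" unfolding W_def by blast
  have wV: "w \<in> V" unfolding wd by (rule sum_psi_in[OF Lm_finite])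
  have "d m = co v m" if m: "m \<in> Lm" for m
  proof -
    have "0 = BV (\<lambda>x. v x - w x) (\<psi> m)" using w psi_W[OF m] by auto
    also have "\<dots> = BV v (\<psi> m) - BV w (\<psi> m)" by (rule B_diff_left[OF LV v wV psiV])
    also have "BV w (\<psi> m) = d m" unfolding wd using BV_sum_psi[OF Lm_finite] m by simp
    finally show ?thesis unfolding co_def by simp
  qed
  then show "w = P v" unfolding wd P_def by (intro ext sum.cong) auto
qed

lemma Tl_eq: "v \<in> V \<Longrightarrow> Tl v = (\<lambda>x. v x - 2 *s P v x)"
  unfolding Tl_def the_P by simp

lemma co_lc: "u \<in> V \<Longrightarrow> v \<in> V \<Longrightarrow> co (\<lambda>x. a *s u x + b *s v x) n = a * co u n + b * co v n"
  unfolding co_def by (rule B_left[OF LV _ _ psiV])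

lemma P_lc:
  assumes "u \<in> V" "v \<in> V"
  shows "P (\<lambda>x. a *s u x + b *s v x) = (\<lambda>x. a *s P u x + b *s P v x)"
  unfolding P_def co_lc[OF assms]
  by (auto simp: fun_eq_iff vec_eq_iff sum_component sum_distrib_left sum.distrib algebra_simps)

lemma T_in: "v \<in> V \<Longrightarrow> Tl v \<in> V"
  unfolding Tl_eq by (rule diff_in[OF LV _ scale_in[OF LV P_in]])

lemma co_T: "v \<in> V \<Longrightarrow> m \<in> Lm \<Longrightarrow> co (\<lambda>x. v x - 2 *s P v x) m = - co v m"
  unfolding co_def
  by (simp add: B_diff_left[OF LV _ scale_in[OF LV P_in] psiV] B_scale_left[OF LV P_in psiV] BV_P_psi co_def)

lemma P_T: "v \<in> V \<Longrightarrow> P (\<lambda>x. v x - 2 *s P v x) = (\<lambda>x. - P v x)"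
proof -
  assume v: "v \<in> V"
  have "P (\<lambda>x. v x - 2 *s P v x) = (\<lambda>x. \<Sum>n\<in>Lm. (- co v n) *s \<psi> n x)"
    unfolding P_def[of "\<lambda>x. v x - 2 *s P v x"] using co_T[OF v] by (intro ext sum.cong) auto
  also have "\<dots> = (\<lambda>x. - P v x)"
    unfolding P_def by (auto simp: fun_eq_iff vec_eq_iff sum_component sum_negf)
  finally show ?thesis .
qed

lemma TT: "v \<in> V \<Longrightarrow> Tl (Tl v) = v"
proof -
  assume v: "v \<in> V"
  have "Tl (Tl v) = (\<lambda>x. Tl v x - 2 *s P (Tl v) x)" by (rule Tl_eq[OF T_in[OF v]])
  also have "\<dots> = v" unfolding Tl_eq[OF v] P_T[OF v] by (auto simp: fun_eq_iff vec_eq_iff)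
  finally show ?thesis .
qed

lemma T_lin:
  assumes u: "u \<in> V" and v: "v \<in> V"
  shows "Tl (\<lambda>x. a *s u x + b *s v x) = (\<lambda>x. a *s Tl u x + b *s Tl v x)"
  unfolding Tl_eq[OF lc_in[OF LV u v]] Tl_eq[OF u] Tl_eq[OF v] P_lc[OF u v]
  by (auto simp: fun_eq_iff vec_eq_iff algebra_simps)

lemma cmod_le_sqrt:
  assumes "spsd V B" "slin V B" "u \<in> V" "v \<in> V"
    and "Re (B u u) \<le> X" "Re (B v v) \<le> Y"
  shows "cmod (B u v) \<le> sqrt (X * Y)"
proof -
  have "(cmod (B u v))\<^sup>2 \<le> Re (B u u) * Re (B v v)" by (rule cauchy_schwarz[OF assms(2,1,3,4)])
  also have "\<dots> \<le> X * Y"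
    using assms(5,6) assms(1,3,4) unfolding spsd_def by (intro mult_mono) auto
  finally show ?thesis by (rule real_le_rsqrt)
qed

lemma spec:
  assumes w: "w \<in> V" and wo: "\<And>m. m \<in> Lm \<Longrightarrow> BV w (\<psi> m) = 0"
    and ks: "0 < ks" "\<And>n. n \<notin> Lm \<Longrightarrow> ks \<le> \<kappa> n"
  shows "ks * Re (B0 w w) \<le> Re (B1 w w)"
proof -
  define Bq where "Bq u v = B1 u v + complex_of_real (- ks) * B0 u v" for u v
  have LQ: "slin V Bq" unfolding Bq_def[abs_def] by (rule lin_comb[OF L1 L0])
  have dQ: "diag Bq" using orth unfolding diag_def Bq_def by auto
  have Bq_pp: "Bq (\<psi> n) (\<psi> n) = complex_of_real ((\<kappa> n - ks) / (\<kappa> n + 1))" for n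
    unfolding Bq_def B1_pp B0_pp by (simp add: diff_divide_distrib)
  define Wn where "Wn = Re (BV w w)"
  have Wn0: "0 \<le> Wn" unfolding Wn_def by (rule reV[OF w])
  define K where "K = ks * real (card Lm) + 2 * (1 + ks) * sqrt (2 * Wn + 2) + (1 + ks)"
  have Kpos: "K > 0" unfolding K_def using ks(1) Wn0 by (intro add_nonneg_pos add_nonneg_nonneg mult_nonneg_nonneg) auto
  have main: "- K * \<epsilon> \<le> Re (Bq w w)" if \<epsilon>: "0 < \<epsilon>" "\<epsilon> \<le> 1" for \<epsilon>
  proof -
    obtain N c where Nc: "sqrt (Re (B1 (\<lambda>x. w x - (\<Sum>n<N. c n *s \<psi> n x)) (\<lambda>x. w x - (\<Sum>n<N. c n *s \<psi> n x))
        + B0 (\<lambda>x. w x - (\<Sum>n<N. c n *s \<psi> n x)) (\<lambda>x. w x - (\<Sum>n<N. c n *s \<psi> n x)))) < \<epsilon>"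
      using compl[OF w \<epsilon>(1)] by blast
    define s where "s = (\<lambda>x. \<Sum>n<N. c n *s \<psi> n x)"
    define e where "e = (\<lambda>x. w x - s x)"
    have sV: "s \<in> V" unfolding s_def by (rule sum_psi_in) simp
    have eV: "e \<in> V" unfolding e_def by (rule diff_in[OF LV w sV])
    define Ve where "Ve = Re (BV e e)"
    define Vs where "Vs = Re (BV s s)"
    have Ve0: "0 \<le> Ve" unfolding Ve_def by (rule reV[OF eV])
    have Vs0: "0 \<le> Vs" unfolding Vs_def by (rule reV[OF sV])
    have "sqrt Ve < \<epsilon>" using Nc unfolding Ve_def BV_def e_def s_def .
    then have "(sqrt Ve)\<^sup>2 < \<epsilon>\<^sup>2" using Ve0 by (intro power_strict_mono) auto
    then have Ve_lt: "Ve < \<epsilon>\<^sup>2" using Ve0 by simp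
    have eps2: "\<epsilon>\<^sup>2 \<le> \<epsilon>" unfolding power2_eq_square using mult_left_mono[OF \<epsilon>(2), of \<epsilon>] \<epsilon>(1) by simp
    have Ve_le: "Ve \<le> \<epsilon>" using Ve_lt eps2 by simp
    have ws: "w = (\<lambda>x. s x + e x)" unfolding e_def by auto
    have "Bq w w = Bq (\<lambda>x. s x + e x) (\<lambda>x. s x + e x)" using ws by simp
    also have "\<dots> = Bq s s + Bq s e + (Bq e s + Bq e e)"
      by (simp add: B_add_left[OF LQ sV eV add_in[OF LQ sV eV]] B_add_right[OF LQ sV eV sV] B_add_right[OF LQ sV eV eV])
    finally have expand: "Re (Bq w w) = Re (Bq s s) + 2 * Re (Bq s e) + Re (Bq e e)"
      using B_herm[OF LQ sV eV] by simp
    have Vs_le: "Vs \<le> 2 * Wn + 2 * Ve"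
    proof -
      have s_eq: "s = (\<lambda>x. w x - 1 *s e x)" unfolding e_def by auto
      have p_eq: "(\<lambda>x. w x - (-1) *s e x) \<in> V" by (rule diff_in[OF LV w scale_in[OF LV eV]])
      have "BV s s = BV w w - BV w e - cnj (BV w e) + BV e e"
        unfolding s_eq using quad_expand[OF LV w eV, of 1] by simp
      moreover have "BV (\<lambda>x. w x - (-1) *s e x) (\<lambda>x. w x - (-1) *s e x) = BV w w + BV w e + cnj (BV w e) + BV e e"
        using quad_expand[OF LV w eV, of "-1"] by simp
      moreover have "0 \<le> Re (BV (\<lambda>x. w x - (-1) *s e x) (\<lambda>x. w x - (-1) *s e x))" by (rule reV[OF p_eq])
      ultimately show ?thesis unfolding Vs_def Wn_def Ve_def by simp
    qed
    have Vs_le2: "Vs \<le> 2 * Wn + 2" using Vs_le Ve_le \<epsilon> by simp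
    have cross: "cmod (Bq s e) \<le> (1 + ks) * sqrt (Vs * Ve)"
    proof -
      have A: "cmod (B1 s e) \<le> sqrt (Vs * Ve)"
        by (rule cmod_le_sqrt[OF P1 L1 sV eV]) (auto simp: Vs_def Ve_def intro: B1_le sV eV)
      have B: "cmod (B0 s e) \<le> sqrt (Vs * Ve)"
        by (rule cmod_le_sqrt[OF P0 L0 sV eV]) (auto simp: Vs_def Ve_def intro: B0_le sV eV)
      have C: "cmod (Bq s e) \<le> cmod (B1 s e) + ks * cmod (B0 s e)"
        unfolding Bq_def using ks(1) norm_triangle_ineq[of "B1 s e" "complex_of_real (- ks) * B0 s e"]
        by (simp add: norm_mult)
      have D: "ks * cmod (B0 s e) \<le> ks * sqrt (Vs * Ve)" by (rule mult_left_mono[OF B]) (use ks(1) in simp)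
      have E: "(1 + ks) * sqrt (Vs * Ve) = sqrt (Vs * Ve) + ks * sqrt (Vs * Ve)" by (simp add: ring_distribs)
      show ?thesis using A C D E by linarith
    qed
    have ee: "- ((1 + ks) * Ve) \<le> Re (Bq e e)"
    proof -
      have A: "Re (Bq e e) = Re (B1 e e) - ks * Re (B0 e e)" unfolding Bq_def by simp
      have B: "Re (B0 e e) \<le> Ve" unfolding Ve_def by (rule B0_le[OF eV])
      have C: "0 \<le> Re (B1 e e)" by (rule re1[OF eV])
      have D: "ks * Re (B0 e e) \<le> ks * Ve" by (rule mult_left_mono[OF B]) (use ks(1) in simp)
      have E: "(1 + ks) * Ve = Ve + ks * Ve" by (simp add: ring_distribs)
      show ?thesis using A C D E Ve0 by linarith
    qed
    have ss: "- (ks * real (card Lm) * Ve) \<le> Re (Bq s s)"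
    proof -
      have "Bq s s = (\<Sum>n<N. c n * cnj (c n) * Bq (\<psi> n) (\<psi> n))"
        unfolding s_def by (rule diag_sum_sum[OF LQ dQ]) simp
      then have "Re (Bq s s) = (\<Sum>n<N. (cmod (c n))\<^sup>2 * ((\<kappa> n - ks) / (\<kappa> n + 1)))"
        by (simp add: Bq_pp Re_sum complex_mult_cnj cmod_power2)
      moreover have "(\<Sum>n<N. (if n \<in> Lm then - ks * Ve else 0)) \<le> (\<Sum>n<N. (cmod (c n))\<^sup>2 * ((\<kappa> n - ks) / (\<kappa> n + 1)))"
      proof (rule sum_mono)
        fix n assume nN: "n \<in> {..<N}"
        have kp: "\<kappa> n + 1 > 0" using kpos[of n] by simp
        show "(if n \<in> Lm then - ks * Ve else 0) \<le> (cmod (c n))\<^sup>2 * ((\<kappa> n - ks) / (\<kappa> n + 1))"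
        proof (cases "n \<in> Lm")
          case True
          have "BV s (\<psi> n) = c n" unfolding s_def using BV_sum_psi[of "{..<N}" c n] nN by simp
          moreover have "BV w (\<psi> n) = 0" by (rule wo[OF True])
          moreover have "BV e (\<psi> n) = BV w (\<psi> n) - BV s (\<psi> n)" unfolding e_def by (rule B_diff_left[OF LV w sV psiV])
          ultimately have "BV e (\<psi> n) = - c n" by simp
          moreover have "(cmod (BV e (\<psi> n)))\<^sup>2 \<le> Re (BV e e) * Re (BV (\<psi> n) (\<psi> n))"
            by (rule cauchy_schwarz[OF LV PV eV psiV])
          ultimately have cn: "(cmod (c n))\<^sup>2 \<le> Ve" unfolding Ve_def BV_pp by simp
          have "0 \<le> ks * \<kappa> n" using ks(1) kpos[of n] by simp
          then have "- ks * (\<kappa> n + 1) \<le> \<kappa> n - ks" using kpos[of n] by (simp add: algebra_simps)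
          then have kk: "- ks \<le> (\<kappa> n - ks) / (\<kappa> n + 1)" by (simp add: pos_le_divide_eq[OF kp])
          have "- ks * Ve \<le> - ks * (cmod (c n))\<^sup>2" using cn ks(1) by simp
          also have "\<dots> = (cmod (c n))\<^sup>2 * (- ks)" by simp
          also have "\<dots> \<le> (cmod (c n))\<^sup>2 * ((\<kappa> n - ks) / (\<kappa> n + 1))"
            by (rule mult_left_mono[OF kk]) simp
          finally show ?thesis using True by simp
        next
          case False
          then have "0 \<le> (\<kappa> n - ks) / (\<kappa> n + 1)" using ks(2)[OF False] kp by simp
          then have "0 \<le> (cmod (c n))\<^sup>2 * ((\<kappa> n - ks) / (\<kappa> n + 1))" by (rule mult_nonneg_nonneg[OF zero_le_power2])
          then show ?thesis using False by (simp only: if_False)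
        qed
      qed
      moreover have "(\<Sum>n<N. (if n \<in> Lm then - ks * Ve else 0)) = - ks * Ve * real (card ({..<N} \<inter> Lm))"
        by (simp add: sum.inter_restrict[symmetric])
      moreover have "card ({..<N} \<inter> Lm) \<le> card Lm" by (rule card_mono[OF Lm_finite]) auto
      moreover have "ks * Ve * real (card ({..<N} \<inter> Lm)) \<le> ks * Ve * real (card Lm)"
        by (rule mult_left_mono) (use \<open>card ({..<N} \<inter> Lm) \<le> card Lm\<close> ks(1) Ve0 in auto)
      moreover have "ks * Ve * real (card Lm) = ks * real (card Lm) * Ve" by simp
      ultimately show ?thesis by linarith
    qed
    have sq: "sqrt (Vs * Ve) \<le> sqrt (2 * Wn + 2) * \<epsilon>"
    proof -
      have "Vs * Ve \<le> (2 * Wn + 2) * \<epsilon>\<^sup>2" using Vs_le2 Ve_lt Vs0 Ve0 by (intro mult_mono) auto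
      then have "sqrt (Vs * Ve) \<le> sqrt ((2 * Wn + 2) * \<epsilon>\<^sup>2)" by (rule real_sqrt_le_mono)
      also have "\<dots> = sqrt (2 * Wn + 2) * \<epsilon>" using \<epsilon> by (simp add: real_sqrt_mult)
      finally show ?thesis .
    qed
    have "- (2 * ((1 + ks) * sqrt (Vs * Ve))) \<le> 2 * Re (Bq s e)"
      using cross abs_Re_le_cmod[of "Bq s e"] by linarith
    then have "Re (Bq w w) \<ge> - (ks * real (card Lm) * Ve) - 2 * ((1 + ks) * sqrt (Vs * Ve)) - (1 + ks) * Ve"
      using expand ss ee by linarith
    moreover have "ks * real (card Lm) * Ve \<le> ks * real (card Lm) * \<epsilon>" using Ve_le ks(1) by (simp add: mult_left_mono)
    moreover have "(1 + ks) * Ve \<le> (1 + ks) * \<epsilon>" using Ve_le ks(1) by (simp add: mult_left_mono)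
    moreover have "(1 + ks) * sqrt (Vs * Ve) \<le> (1 + ks) * (sqrt (2 * Wn + 2) * \<epsilon>)" using sq ks(1) by (simp add: mult_left_mono)
    ultimately have "Re (Bq w w) \<ge> - (ks * real (card Lm) * \<epsilon>) - 2 * ((1 + ks) * (sqrt (2 * Wn + 2) * \<epsilon>)) - (1 + ks) * \<epsilon>"
      by linarith
    moreover have "K * \<epsilon> = ks * real (card Lm) * \<epsilon> + 2 * ((1 + ks) * (sqrt (2 * Wn + 2) * \<epsilon>)) + (1 + ks) * \<epsilon>"
      unfolding K_def by (simp add: algebra_simps)
    ultimately show ?thesis by linarith
  qed
  have "0 \<le> Re (Bq w w)"
  proof (rule ccontr)
    assume neg: "\<not> 0 \<le> Re (Bq w w)"
    define \<epsilon> where "\<epsilon> = min 1 (- Re (Bq w w) / (2 * K))"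
    have "0 < - Re (Bq w w) / (2 * K)" using neg Kpos by (intro divide_pos_pos) auto
    then have e0: "0 < \<epsilon>" unfolding \<epsilon>_def by simp
    have e1: "\<epsilon> \<le> 1" unfolding \<epsilon>_def by simp
    have "K * \<epsilon> \<le> K * (- Re (Bq w w) / (2 * K))" unfolding \<epsilon>_def using Kpos by (intro mult_left_mono) auto
    also have "\<dots> = - Re (Bq w w) / 2" using Kpos by simp
    finally show False using main[OF e0 e1] neg by linarith
  qed
  then show ?thesis unfolding Bq_def by simp
qed

lemma A_pp: "A (\<psi> n) (\<psi> n) = complex_of_real ((\<kappa> n - \<omega>2) / (\<kappa> n + 1))"
  unfolding A_def B1_pp B0_pp by (simp add: diff_divide_distrib)

lemma decomp:
  assumes v: "v \<in> V" and p_def: "p = P v" and w_def: "w = (\<lambda>x. v x - P v x)"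
  shows "p \<in> V" "w \<in> V" "\<And>m. m \<in> Lm \<Longrightarrow> BV w (\<psi> m) = 0"
    "v = (\<lambda>x. p x + w x)" "Tl v = (\<lambda>x. w x - p x)"
    "BV p w = 0" "BV w p = 0" "A p w = 0" "A w p = 0"
proof -
  show pV: "p \<in> V" unfolding p_def by (rule P_in)
  show wV: "w \<in> V" unfolding w_def by (rule diff_in[OF LV v P_in])
  show wo: "\<And>m. m \<in> Lm \<Longrightarrow> BV w (\<psi> m) = 0" unfolding w_def by (rule orth_P[OF v])
  show "v = (\<lambda>x. p x + w x)" unfolding p_def w_def by simp
  show "Tl v = (\<lambda>x. w x - p x)" unfolding Tl_eq[OF v] p_def w_def by (auto simp: fun_eq_iff vec_eq_iff)
  have bv: "BV (\<psi> n) w = 0" if n: "n \<in> Lm" for n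
    using B_herm[OF LV wV psiV, of n] wo[OF n] by simp
  have b0: "B0 (\<psi> n) w = 0" if n: "n \<in> Lm" for n
  proof -
    have "complex_of_real (\<kappa> n + 1) * B0 (\<psi> n) w = 0" using BV_psi[OF wV, of n] bv[OF n] by simp
    moreover have "complex_of_real (\<kappa> n + 1) \<noteq> 0" using kpos[of n] by (metis of_real_eq_0_iff add_pos_pos zero_less_one less_irrefl)
    ultimately show ?thesis by simp
  qed
  have a: "A (\<psi> n) w = 0" if n: "n \<in> Lm" for n
    unfolding A_def using eig[OF wV, of n] b0[OF n] by simp
  have "BV p w = (\<Sum>n\<in>Lm. co v n * BV (\<psi> n) w)" unfolding p_def P_def by (rule B_sum_left[OF LV Lm_finite psiV wV])
  also have "\<dots> = 0" using bv by simp
  finally show bpw: "BV p w = 0" .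
  show "BV w p = 0" using B_herm[OF LV pV wV] bpw by simp
  have "A p w = (\<Sum>n\<in>Lm. co v n * A (\<psi> n) w)" unfolding p_def P_def by (rule B_sum_left[OF LA Lm_finite psiV wV])
  also have "\<dots> = 0" using a by simp
  finally show apw: "A p w = 0" .
  show "A w p = 0" using B_herm[OF LA pV wV] apw by simp
qed

lemma main_abs:
  assumes om: "0 \<le> \<omega>2"
  shows "bij_betw Tl V V \<and> (\<forall>u\<in>V. \<forall>v\<in>V. \<forall>a b. Tl (\<lambda>x. a *s u x + b *s v x) = (\<lambda>x. a *s Tl u x + b *s Tl v x))
    \<and> (\<exists>C. \<forall>v\<in>V. sqrt (Re (BV (Tl v) (Tl v))) \<le> C * sqrt (Re (BV v v)))
    \<and> (\<exists>\<alpha>>0. \<forall>v\<in>V. \<alpha> * (sqrt (Re (BV v v)))\<^sup>2 \<le> cmod (A v (Tl v)))"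
proof (intro conjI)
  show "bij_betw Tl V V"
    by (rule bij_betw_byWitness[where f'=Tl]) (auto simp: TT T_in)
  show "\<forall>u\<in>V. \<forall>v\<in>V. \<forall>a b. Tl (\<lambda>x. a *s u x + b *s v x) = (\<lambda>x. a *s Tl u x + b *s Tl v x)"
    using T_lin by blast
  have normsq: "Re (BV (Tl v) (Tl v)) = Re (BV v v)" if v: "v \<in> V" for v
  proof -
    define p where "p = P v"
    define w where "w = (\<lambda>x. v x - P v x)"
    note d = decomp[OF v p_def w_def]
    have "BV (Tl v) (Tl v) = BV (\<lambda>x. w x - p x) (\<lambda>x. w x - p x)" using d(5) by simp
    also have "\<dots> = BV w w - BV w p - (BV p w - BV p p)"
      using d(1,2) diff_in[OF LV d(2,1)]
      by (simp add: B_diff_left[OF LV d(2,1)] B_diff_right[OF LV d(2,1) d(1)] B_diff_right[OF LV d(2,1) d(2)])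
    also have "\<dots> = BV w w + BV p p" using d(6,7) by simp
    also have "BV v v = BV (\<lambda>x. p x + w x) (\<lambda>x. p x + w x)" using d(4) by simp
    then have "BV v v = BV p p + BV p w + (BV w p + BV w w)"
      using add_in[OF LV d(1,2)] by (simp add: B_add_left[OF LV d(1,2)] B_add_right[OF LV d(1,2) d(1)] B_add_right[OF LV d(1,2) d(2)])
    then have "BV v v = BV w w + BV p p" using d(6,7) by simp
    ultimately show ?thesis by simp
  qed
  show "\<exists>C. \<forall>v\<in>V. sqrt (Re (BV (Tl v) (Tl v))) \<le> C * sqrt (Re (BV v v))"
    by (rule exI[of _ 1]) (simp add: normsq)
  obtain ks where ks: "0 < ks" "\<omega>2 < ks" "\<And>n. n \<notin> Lm \<Longrightarrow> ks \<le> \<kappa> n" using ks_ex by blast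
  define \<delta>1 where "\<delta>1 = (ks - \<omega>2) / (ks + 1)"
  have d1: "\<delta>1 > 0" unfolding \<delta>1_def using ks by simp
  define \<delta>2 where "\<delta>2 = Min (insert 1 ((\<lambda>n. (\<omega>2 - \<kappa> n) / (\<kappa> n + 1)) ` Lm))"
  have fin2: "finite (insert 1 ((\<lambda>n. (\<omega>2 - \<kappa> n) / (\<kappa> n + 1)) ` Lm))" using Lm_finite by simp
  have pos: "0 < (\<omega>2 - \<kappa> n) / (\<kappa> n + 1)" if "n \<in> Lm" for n
    using that kpos[of n] unfolding Lm_def by simp
  have d2: "\<delta>2 > 0" unfolding \<delta>2_def using Min_gr_iff[OF fin2, of 0] pos by auto
  have d2le: "\<delta>2 \<le> (\<omega>2 - \<kappa> n) / (\<kappa> n + 1)" if "n \<in> Lm" for n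
    unfolding \<delta>2_def using that fin2 by (intro Min_le) auto
  define \<alpha> where "\<alpha> = min \<delta>1 \<delta>2"
  have apos: "\<alpha> > 0" unfolding \<alpha>_def using d1 d2 by simp
  show "\<exists>\<alpha>>0. \<forall>v\<in>V. \<alpha> * (sqrt (Re (BV v v)))\<^sup>2 \<le> cmod (A v (Tl v))"
  proof (intro exI[of _ \<alpha>] conjI ballI apos)
    fix v assume v: "v \<in> V"
    define p where "p = P v"
    define w where "w = (\<lambda>x. v x - P v x)"
    note d = decomp[OF v p_def w_def]
    have Avt: "A v (Tl v) = A w w - A p p"
    proof -
      have "A v (Tl v) = A (\<lambda>x. p x + w x) (\<lambda>x. w x - p x)" using d(4,5) by simp
      also have "\<dots> = A p (\<lambda>x. w x - p x) + A w (\<lambda>x. w x - p x)"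
        by (rule B_add_left[OF LA d(1,2) diff_in[OF LA d(2,1)]])
      also have "\<dots> = (A p w - A p p) + (A w w - A w p)"
        by (simp add: B_diff_right[OF LA d(2,1) d(1)] B_diff_right[OF LA d(2,1) d(2)])
      finally show ?thesis using d(8,9) by simp
    qed
    have BVv: "Re (BV v v) = Re (BV w w) + Re (BV p p)"
    proof -
      have "BV v v = BV (\<lambda>x. p x + w x) (\<lambda>x. p x + w x)" using d(4) by simp
      then have "BV v v = BV p p + BV p w + (BV w p + BV w w)"
        using add_in[OF LV d(1,2)] by (simp add: B_add_left[OF LV d(1,2)] B_add_right[OF LV d(1,2) d(1)] B_add_right[OF LV d(1,2) d(2)])
      then show ?thesis using d(6,7) by simp
    qed
    have spw: "ks * Re (B0 w w) \<le> Re (B1 w w)" by (rule spec[OF d(2) d(3) ks(1) ks(3)])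
    have Aww: "\<delta>1 * Re (BV w w) \<le> Re (A w w)"
    proof -
      define a where "a = Re (B1 w w)"
      define b where "b = Re (B0 w w)"
      have "(ks + 1) * (a - \<omega>2 * b) - (ks - \<omega>2) * (a + b) = (1 + \<omega>2) * (a - ks * b)"
        by (simp add: algebra_simps)
      moreover have "0 \<le> (1 + \<omega>2) * (a - ks * b)" using om spw unfolding a_def b_def by simp
      ultimately have "(ks - \<omega>2) * (a + b) \<le> (ks + 1) * (a - \<omega>2 * b)" by linarith
      then have "\<delta>1 * (a + b) \<le> a - \<omega>2 * b"
        unfolding \<delta>1_def using ks by (simp add: field_simps)
      then show ?thesis unfolding a_def b_def A_def BV_def by simp
    qed
    have App: "\<delta>2 * Re (BV p p) \<le> - Re (A p p)"
    proof -
      have "BV p p = (\<Sum>n\<in>Lm. co v n * cnj (co v n) * BV (\<psi> n) (\<psi> n))"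
        unfolding p_def P_def by (rule diag_sum_sum[OF LV diagV Lm_finite])
      then have bp: "Re (BV p p) = (\<Sum>n\<in>Lm. (cmod (co v n))\<^sup>2)"
        by (simp add: BV_pp Re_sum complex_mult_cnj cmod_power2)
      have "A p p = (\<Sum>n\<in>Lm. co v n * cnj (co v n) * A (\<psi> n) (\<psi> n))"
        unfolding p_def P_def by (rule diag_sum_sum[OF LA diagA Lm_finite])
      then have ap0: "Re (A p p) = (\<Sum>n\<in>Lm. (cmod (co v n))\<^sup>2 * ((\<kappa> n - \<omega>2) / (\<kappa> n + 1)))"
        by (simp add: A_pp Re_sum complex_mult_cnj cmod_power2)
      have "- Re (A p p) = (\<Sum>n\<in>Lm. - ((cmod (co v n))\<^sup>2 * ((\<kappa> n - \<omega>2) / (\<kappa> n + 1))))"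
        unfolding ap0 by (simp add: sum_negf)
      also have "\<dots> = (\<Sum>n\<in>Lm. (cmod (co v n))\<^sup>2 * ((\<omega>2 - \<kappa> n) / (\<kappa> n + 1)))"
        by (intro sum.cong refl) (simp add: diff_divide_distrib algebra_simps)
      finally have ap: "- Re (A p p) = (\<Sum>n\<in>Lm. (cmod (co v n))\<^sup>2 * ((\<omega>2 - \<kappa> n) / (\<kappa> n + 1)))" .
      have "\<delta>2 * Re (BV p p) = (\<Sum>n\<in>Lm. (cmod (co v n))\<^sup>2 * \<delta>2)" unfolding bp by (simp add: sum_distrib_left mult.commute)
      also have "\<dots> \<le> (\<Sum>n\<in>Lm. (cmod (co v n))\<^sup>2 * ((\<omega>2 - \<kappa> n) / (\<kappa> n + 1)))"
        by (rule sum_mono, rule mult_left_mono[OF d2le]) auto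
      finally show ?thesis unfolding ap .
    qed
    have wp0: "0 \<le> Re (BV w w)" "0 \<le> Re (BV p p)" using reV d(1,2) by auto
    have "\<alpha> * Re (BV v v) = \<alpha> * Re (BV w w) + \<alpha> * Re (BV p p)" unfolding BVv by (simp add: algebra_simps)
    also have "\<dots> \<le> \<delta>1 * Re (BV w w) + \<delta>2 * Re (BV p p)"
      unfolding \<alpha>_def using wp0 by (intro add_mono mult_right_mono) auto
    also have "\<dots> \<le> Re (A v (Tl v))" unfolding Avt using Aww App by simp
    also have "\<dots> \<le> cmod (A v (Tl v))" by (rule complex_Re_le_cmod)
    finally show "\<alpha> * (sqrt (Re (BV v v)))\<^sup>2 \<le> cmod (A v (Tl v))" using reV[OF v] by simp
  qed
qed

end


theorem mainTheorem1:
  fixes \<Omega> :: "(real^'d) set"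
    and \<mu> lam \<rho> \<omega> :: real
    and \<psi> :: "nat \<Rightarrow> real^'d \<Rightarrow> complex^'d"
    and \<kappa> :: "nat \<Rightarrow> real"
  assumes "bounded_lipschitz_domain \<Omega>"
    and "\<rho> > 0" and "\<mu> > 0" and "lam > 0" and "\<omega> > 0"
    and "elastic_eigenbasis \<mu> lam \<rho> \<Omega> \<psi> \<kappa>"
    and "\<omega>\<^sup>2 \<notin> range \<kappa>"
  defines "T \<equiv> Top \<mu> lam \<rho> \<omega> \<Omega> \<psi> \<kappa>"
  shows "bij_betw T (H10 \<Omega>) (H10 \<Omega>)
    \<and> (\<forall>u\<in>H10 \<Omega>. \<forall>v\<in>H10 \<Omega>. \<forall>a b :: complex.
          T (\<lambda>x. a *s u x + b *s v x) = (\<lambda>x. a *s T u x + b *s T v x))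
    \<and> (\<exists>C. \<forall>v\<in>H10 \<Omega>. normV \<mu> lam \<rho> \<Omega> (T v) \<le> C * normV \<mu> lam \<rho> \<Omega> v)
    \<and> (\<exists>\<alpha>>0. \<forall>v\<in>H10 \<Omega>.
          cmod (a1 \<mu> lam \<rho> \<omega> \<Omega> v (T v)) \<ge> \<alpha> * (normV \<mu> lam \<rho> \<Omega> v)\<^sup>2)"
proof -
  have op: "open \<Omega>" and bd: "bounded \<Omega>" using assms(1) unfolding bounded_lipschitz_domain_def by auto
  interpret D: bdom \<Omega> by unfold_locales (use op bd in auto)
  have EB: "\<forall>n. \<psi> n \<in> H10 \<Omega>" "\<forall>n. \<kappa> n > 0" "mono \<kappa>" "filterlim \<kappa> at_top sequentially"
     "\<forall>n. \<forall>v\<in>H10 \<Omega>. ip1 \<mu> lam \<Omega> (\<psi> n) v = of_real (\<kappa> n) * ip0 \<rho> \<Omega> (\<psi> n) v"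
     "\<forall>n m. n \<noteq> m \<longrightarrow> ip1 \<mu> lam \<Omega> (\<psi> n) (\<psi> m) = 0 \<and> ip0 \<rho> \<Omega> (\<psi> n) (\<psi> m) = 0"
     "\<forall>n. normV \<mu> lam \<rho> \<Omega> (\<psi> n) = 1"
     "\<forall>v\<in>H10 \<Omega>. \<forall>e>0. \<exists>N c. normV \<mu> lam \<rho> \<Omega> (\<lambda>x. v x - (\<Sum>n<N. c n *s \<psi> n x)) < e"
    using assms(6) unfolding elastic_eigenbasis_def by blast+
  have L1: "slin (H10 \<Omega>) (ip1 \<mu> lam \<Omega>)"
    by (rule linI) (auto intro: D.H10_lin D.ip1_lin D.H10_H1v D.ip1_cnj)
  have L0: "slin (H10 \<Omega>) (ip0 \<rho> \<Omega>)"
    by (rule linI) (auto intro: D.H10_lin D.ip0_lin D.H10_H1v D.ip0_cnj)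
  have P1: "spsd (H10 \<Omega>) (ip1 \<mu> lam \<Omega>)" unfolding spsd_def using D.ip1_self assms(3,4) by auto
  have P0: "spsd (H10 \<Omega>) (ip0 \<rho> \<Omega>)" unfolding spsd_def using D.ip0_self assms(2) by auto
  interpret S: spec_setting "H10 \<Omega>" "ip1 \<mu> lam \<Omega>" "ip0 \<rho> \<Omega>" \<psi> \<kappa> "\<omega>\<^sup>2"
  proof (unfold_locales)
    show "slin (H10 \<Omega>) (ip1 \<mu> lam \<Omega>)" by (rule L1)
    show "slin (H10 \<Omega>) (ip0 \<rho> \<Omega>)" by (rule L0)
    show "spsd (H10 \<Omega>) (ip1 \<mu> lam \<Omega>)" by (rule P1)
    show "spsd (H10 \<Omega>) (ip0 \<rho> \<Omega>)" by (rule P0)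
    show "\<psi> n \<in> H10 \<Omega>" for n using EB(1) by blast
    show "\<kappa> n > 0" for n using EB(2) by blast
    show "mono \<kappa>" by (rule EB(3))
    show "filterlim \<kappa> at_top sequentially" by (rule EB(4))
    show "v \<in> H10 \<Omega> \<Longrightarrow> ip1 \<mu> lam \<Omega> (\<psi> n) v = complex_of_real (\<kappa> n) * ip0 \<rho> \<Omega> (\<psi> n) v" for v n using EB(5) by blast
    show "n \<noteq> m \<Longrightarrow> ip1 \<mu> lam \<Omega> (\<psi> n) (\<psi> m) = 0 \<and> ip0 \<rho> \<Omega> (\<psi> n) (\<psi> m) = 0" for n m using EB(6) by blast
    show "sqrt (Re (ip1 \<mu> lam \<Omega> (\<psi> n) (\<psi> n) + ip0 \<rho> \<Omega> (\<psi> n) (\<psi> n))) = 1" for n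
      using EB(7) unfolding normV_def ipV_def by blast
    show "\<exists>N c. sqrt (Re (ip1 \<mu> lam \<Omega> (\<lambda>x. v x - (\<Sum>n<N. c n *s \<psi> n x)) (\<lambda>x. v x - (\<Sum>n<N. c n *s \<psi> n x))
        + ip0 \<rho> \<Omega> (\<lambda>x. v x - (\<Sum>n<N. c n *s \<psi> n x)) (\<lambda>x. v x - (\<Sum>n<N. c n *s \<psi> n x)))) < e"
      if "v \<in> H10 \<Omega>" "e > 0" for v e
      using EB(8) that unfolding normV_def ipV_def by blast
    show "\<omega>\<^sup>2 \<notin> range \<kappa>" by (rule assms(7))
  qed
  have TT: "T = S.Tl"
    unfolding T_def Top_def projV_def S.Tl_def Vminus_def low_modes_def S.W_def S.Lm_def S.BV_def[abs_def] ipV_def[abs_def]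
    by (rule refl)
  have NV: "normV \<mu> lam \<rho> \<Omega> v = sqrt (Re (S.BV v v))" for v
    unfolding normV_def ipV_def S.BV_def by (rule refl)
  have AA: "a1 \<mu> lam \<rho> \<omega> \<Omega> v w = S.A v w" for v w
    unfolding a1_def S.A_def by (rule refl)
  show ?thesis unfolding TT NV AA using S.main_abs[of] by simp
qed


end
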